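(* Let $f$ be a real homogeneous quartic polynomial on $\mathbb{R}^n$ with $|\nabla_x f|^2=16|x|^6$. If $f\in E_{0,n-1}\cup E_{n-1,0}\cup E_{n-2,1}$, then $f$ is primitive.
   Context: $\mathbb{R}^n$ carries the standard Euclidean inner product and norm $|\cdot|$. For nonnegative integers $p,q$ with $p+q=n-1$, we say $f\in E_{p,q}$ if there are orthonormal coordinates $x=(\xi,\eta,x_n)$ on $\mathbb{R}^n$, with $\xi\in\mathbb{R}^p$, $\eta\in\mathbb{R}^q$, $\bar x=(\xi,\eta)$, in which $f(x)=x_n^4+2(|\xi|^2-3|\eta|^2)x_n^2+8\psi(\bar x)x_n+\theta(\bar x)$ for some homogeneous polynomials $\psi$ of degree $3$ and $\theta$ of degree $4$ in $\bar x$. For a linear subspace $H\subseteq\mathbb{R}^n$ with orthogonal projections $\xi_H,\eta_H$ of $x$ onto $H,H^\perp$, set $h_{4,H}(x)=|\xi_H|^4-6|\xi_H|^2|\eta_H|^2+|\eta_H|^4$. A quartic $f$ is primitive if there exist a subspace $H$, $U\in O(n)$ and $\epsilon=\pm1$ with $f(x)=\epsilon\, h_{4,H}(Ux)$ for all $x$. *)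

theory Defs
  imports "HOL-Analysis.Analysis"
begin

definition hom_poly :: "nat \<Rightarrow> 'n::finite set \<Rightarrow> (real^'n \<Rightarrow> real) \<Rightarrow> bool" where
  "hom_poly d S g \<longleftrightarrow>
     (\<exists>c :: 'n list \<Rightarrow> real. \<forall>y.
        g y = (\<Sum>is \<in> {is. length is = d \<and> set is \<subseteq> S}. c is * prod_list (map (\<lambda>i. y $ i) is)))"

definition grad :: "(real^'n::finite \<Rightarrow> real) \<Rightarrow> real^'n \<Rightarrow> real^'n" where
  "grad f x = (\<chi> i. deriv (\<lambda>t. f (x + t *\<^sub>R axis i 1)) 0)"

text \<open>The class E_{p,q}: in orthonormal coordinates y = Q x (Q orthogonal), with the
  coordinate index set split as P (the xi-part, |P| = p), R (the eta-part, |R| = q)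
  and a single index k (the x_n coordinate).\<close>
definition E_class :: "nat \<Rightarrow> nat \<Rightarrow> (real^'n::finite \<Rightarrow> real) \<Rightarrow> bool" where
  "E_class p q f \<longleftrightarrow>
     (\<exists>(Q::real^'n^'n) P R k \<psi> \<theta>.
        orthogonal_matrix Q \<and> P \<inter> R = {} \<and> k \<notin> P \<and> k \<notin> R \<and> P \<union> R \<union> {k} = UNIV \<and>
        card P = p \<and> card R = q \<and>
        hom_poly 3 (P \<union> R) \<psi> \<and> hom_poly 4 (P \<union> R) \<theta> \<and>
        (\<forall>x. let y = Q *v x in
            f x = (y$k)^4 + 2 * ((\<Sum>i\<in>P. (y$i)^2) - 3 * (\<Sum>i\<in>R. (y$i)^2)) * (y$k)^2
                  + 8 * \<psi> y * y$k + \<theta> y))"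

definition proj_onto :: "(real^'n::finite) set \<Rightarrow> real^'n \<Rightarrow> real^'n" where
  "proj_onto H x = (THE p. p \<in> H \<and> (\<forall>h\<in>H. (x - p) \<bullet> h = 0))"

definition h4 :: "(real^'n::finite) set \<Rightarrow> real^'n \<Rightarrow> real" where
  "h4 H x = (let a = norm (proj_onto H x); b = norm (x - proj_onto H x) in
             a^4 - 6 * a^2 * b^2 + b^4)"

definition primitive :: "(real^'n::finite \<Rightarrow> real) \<Rightarrow> bool" where
  "primitive f \<longleftrightarrow>
     (\<exists>H (U::real^'n^'n) (\<epsilon>::real). subspace H \<and> orthogonal_matrix U \<and> (\<epsilon> = 1 \<or> \<epsilon> = -1) \<and>
        (\<forall>x. f x = \<epsilon> * h4 H (U *v x)))"

end

theory Submission
  imports Defs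
begin


definition mono_of :: "'n list \<Rightarrow> real^'n::finite \<Rightarrow> real" where
  "mono_of is y = prod_list (map (\<lambda>i. y $ i) is)"

lemma finite_lists_dS: "finite {is::('n::finite) list. length is = d \<and> set is \<subseteq> S}"
  by (rule finite_subset[OF _ finite_lists_length_eq[of "UNIV::'n set" d]]) auto

lemma hom_poly_induct[consumes 1, case_names zero add smult mono]:
  assumes "hom_poly d S g"
    and "P (\<lambda>_. 0)"
    and "\<And>g h. P g \<Longrightarrow> P h \<Longrightarrow> P (\<lambda>y. g y + h y)"
    and "\<And>a g. P g \<Longrightarrow> P (\<lambda>y. a * g y)"
    and "\<And>is. length is = d \<Longrightarrow> set is \<subseteq> S \<Longrightarrow> P (mono_of is)"
  shows "P g"
proof -
  from assms(1) obtain c where c: "\<forall>y. g y = (\<Sum>is \<in> {is. length is = d \<and> set is \<subseteq> S}. c is * mono_of is y)"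
    unfolding hom_poly_def mono_of_def by blast
  have "\<And>A. A \<subseteq> {is. length is = d \<and> set is \<subseteq> S} \<Longrightarrow> P (\<lambda>y. \<Sum>is\<in>A. c is * mono_of is y)"
  proof -
    fix A assume A: "A \<subseteq> {is. length is = d \<and> set is \<subseteq> S}"
    have "finite A" using A finite_lists_dS finite_subset by blast
    then show "P (\<lambda>y. \<Sum>is\<in>A. c is * mono_of is y)" using A
    proof (induction A rule: finite_induct)
      case empty then show ?case using assms(2) by simp
    next
      case (insert x F)
      then have "P (\<lambda>y. c x * mono_of x y)" using assms(4,5) by auto
      then show ?case using insert assms(3)[of "\<lambda>y. c x * mono_of x y"] by simp
    qed
  qed
  then have "P (\<lambda>y. \<Sum>is\<in>{is. length is = d \<and> set is \<subseteq> S}. c is * mono_of is y)" by blast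
  moreover have "g = (\<lambda>y. \<Sum>is\<in>{is. length is = d \<and> set is \<subseteq> S}. c is * mono_of is y)"
    using c by auto
  ultimately show ?thesis by simp
qed

lemma hom_poly_zero: "hom_poly d S (\<lambda>_. 0)"
  unfolding hom_poly_def by (rule exI[of _ "\<lambda>_. 0"]) simp

lemma hom_poly_add: "hom_poly d S g \<Longrightarrow> hom_poly d S h \<Longrightarrow> hom_poly d S (\<lambda>y. g y + h y)"
  unfolding hom_poly_def
  apply (elim exE)
  subgoal for c1 c2 by (rule exI[of _ "\<lambda>is. c1 is + c2 is"]) (simp add: sum.distrib algebra_simps)
  done

lemma hom_poly_smult: "hom_poly d S g \<Longrightarrow> hom_poly d S (\<lambda>y. a * g y)"
  unfolding hom_poly_def
  apply (elim exE)
  subgoal for c by (rule exI[of _ "\<lambda>is. a * c is"]) (simp add: sum_distrib_left algebra_simps)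
  done

lemma hom_poly_mono_of: "length is = d \<Longrightarrow> set is \<subseteq> S \<Longrightarrow> hom_poly d S (mono_of is)"
proof -
  assume a: "length is = d" "set is \<subseteq> S"
  have "\<forall>y. mono_of is y = (\<Sum>js \<in> {is. length is = d \<and> set is \<subseteq> S}. (if js = is then 1 else 0) * mono_of js y)"
  proof
    fix y
    have "(\<Sum>js \<in> {is. length is = d \<and> set is \<subseteq> S}. (if js = is then 1 else 0) * mono_of js y)
        = (\<Sum>js \<in> {is. length is = d \<and> set is \<subseteq> S}. if js = is then mono_of js y else 0)"
      by (intro sum.cong) auto
    also have "\<dots> = mono_of is y" using a by (simp add: sum.delta[OF finite_lists_dS])
    finally show "mono_of is y = (\<Sum>js \<in> {is. length is = d \<and> set is \<subseteq> S}. (if js = is then 1 else 0) * mono_of js y)" by simp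
  qed
  then show ?thesis unfolding hom_poly_def mono_of_def
    by (intro exI[of _ "\<lambda>js. if js = is then 1 else 0"]) simp
qed

lemma hom_poly_eq: "hom_poly d S g \<Longrightarrow> (\<And>y. g y = h y) \<Longrightarrow> hom_poly d S h"
proof -
  assume "hom_poly d S g" "\<And>y. g y = h y"
  moreover have "g = h" using calculation by auto
  ultimately show ?thesis by simp
qed

lemma hom_poly_subset: "hom_poly d S g \<Longrightarrow> S \<subseteq> T \<Longrightarrow> hom_poly d T g"
proof (induction rule: hom_poly_induct)
  case zero show ?case by (rule hom_poly_zero)
next
  case (add g h) then show ?case using hom_poly_add by blast
next
  case (smult a g) then show ?case using hom_poly_smult by blast
next
  case (mono "is") then show ?case by (intro hom_poly_mono_of) auto
qed

lemma mono_of_append: "mono_of (is @ js) y = mono_of is y * mono_of js y"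
  by (simp add: mono_of_def)

lemma hom_poly_mono_mult:
  assumes "hom_poly b S h" "length is = a" "set is \<subseteq> S"
  shows "hom_poly (a+b) S (\<lambda>y. mono_of is y * h y)"
  using assms(1)
proof (induction rule: hom_poly_induct)
  case zero show ?case by (simp add: hom_poly_zero)
next
  case (add g1 g2)
  have "hom_poly (a+b) S (\<lambda>y. mono_of is y * g1 y + mono_of is y * g2 y)"
    by (rule hom_poly_add[OF add.IH])
  then show ?case by (simp add: distrib_left)
next
  case (smult c g)
  have "hom_poly (a+b) S (\<lambda>y. c * (mono_of is y * g y))"
    by (rule hom_poly_smult[OF smult.IH])
  then show ?case by (simp add: algebra_simps)
next
  case (mono js)
  have "hom_poly (a+b) S (mono_of (is @ js))"
    using mono assms(2,3) by (intro hom_poly_mono_of) auto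
  then show ?case by (rule hom_poly_eq) (simp add: mono_of_append)
qed

lemma hom_poly_mult:
  assumes "hom_poly a S g" "hom_poly b S h"
  shows "hom_poly (a+b) S (\<lambda>y. g y * h y)"
  using assms(1)
proof (induction rule: hom_poly_induct)
  case zero show ?case by (simp add: hom_poly_zero)
next
  case (add g1 g2)
  have "hom_poly (a+b) S (\<lambda>y. g1 y * h y + g2 y * h y)"
    by (rule hom_poly_add[OF add.IH])
  then show ?case by (simp add: distrib_right)
next
  case (smult c g)
  have "hom_poly (a+b) S (\<lambda>y. c * (g y * h y))"
    by (rule hom_poly_smult[OF smult.IH])
  then show ?case by (simp add: algebra_simps)
next
  case (mono js)
  then show ?case using hom_poly_mono_mult[OF assms(2)] by blast
qed

lemma hom_poly_const: "hom_poly 0 S (\<lambda>_. c)"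
proof -
  have "hom_poly 0 S (mono_of [])" by (rule hom_poly_mono_of) auto
  then have "hom_poly 0 S (\<lambda>y. c * mono_of [] y)" by (rule hom_poly_smult)
  then show ?thesis by (simp add: mono_of_def)
qed

lemma hom_poly_coord: "i \<in> S \<Longrightarrow> hom_poly 1 S (\<lambda>y. y $ i)"
proof -
  assume "i \<in> S"
  then have "hom_poly 1 S (mono_of [i])" by (intro hom_poly_mono_of) auto
  then show ?thesis by (rule hom_poly_eq) (simp add: mono_of_def)
qed

lemma hom_poly_sum: "finite A \<Longrightarrow> (\<And>a. a \<in> A \<Longrightarrow> hom_poly d S (g a)) \<Longrightarrow> hom_poly d S (\<lambda>y. \<Sum>a\<in>A. g a y)"
proof (induction A rule: finite_induct)
  case empty then show ?case by (simp add: hom_poly_zero)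
next
  case (insert x F) then show ?case by (simp add: hom_poly_add)
qed


definition pd :: "(real^'n::finite \<Rightarrow> real) \<Rightarrow> real^'n \<Rightarrow> 'n \<Rightarrow> real" where
  "pd g y i = deriv (\<lambda>s. g (y + s *\<^sub>R axis i 1)) 0"

lemma grad_pd: "grad f x $ i = pd f x i"
  by (simp add: grad_def pd_def)

lemma hom_poly_local:
  assumes "hom_poly d S g" "\<forall>i\<in>S. y $ i = y' $ i"
  shows "g y = g y'"
  using assms(1)
proof (induction rule: hom_poly_induct)
  case (mono "is")
  then have "map (\<lambda>i. y $ i) is = map (\<lambda>i. y' $ i) is" using assms(2) by (auto intro: map_cong)
  then show ?case by (simp add: mono_of_def del: map_eq_conv)
qed auto

lemma prod_list_scale: "prod_list (map (\<lambda>i. c * ((y::real^'n::finite) $ i)) is) = c ^ length is * prod_list (map (\<lambda>i. y $ i) is)"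
proof (induction "is")
  case (Cons a "is")
  have "prod_list (map (\<lambda>i. c * (y $ i)) (a # is)) = c * (y $ a) * prod_list (map (\<lambda>i. c * (y $ i)) is)" by simp
  also have "\<dots> = c * (y $ a) * (c ^ length is * prod_list (map (\<lambda>i. y $ i) is))" using Cons by simp
  also have "\<dots> = c ^ length (a # is) * prod_list (map (\<lambda>i. y $ i) (a # is))" by simp
  finally show ?case .
qed simp

lemma hom_poly_homog:
  assumes "hom_poly d S g"
  shows "g (c *\<^sub>R y) = c ^ d * g y"
  using assms
proof (induction rule: hom_poly_induct)
  case (add g h) then show ?case by (simp add: distrib_left)
next
  case (mono "is") then show ?case by (simp add: mono_of_def prod_list_scale)
qed auto

lemma mono_of_differentiable: "mono_of is differentiable (at y)"
proof (induction "is")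
  case Nil then show ?case by (simp add: mono_of_def)
next
  case (Cons i "is")
  have e: "mono_of (i # is) = (\<lambda>y. y $ i * mono_of is y)" by (auto simp: mono_of_def)
  have "(\<lambda>y. y $ i) differentiable (at y)"
    by (rule bounded_linear_imp_differentiable) (rule bounded_linear_vec_nth)
  then show ?case unfolding e using Cons by (intro differentiable_mult) auto
qed

lemma hom_poly_differentiable:
  assumes "hom_poly d S g"
  shows "g differentiable (at y)"
  using assms
proof (induction rule: hom_poly_induct)
  case (add g h) then show ?case by (intro differentiable_add)
next
  case (smult a g) then show ?case by (intro differentiable_mult) auto
next
  case (mono "is") show ?case by (rule mono_of_differentiable)
qed auto

lemma dir_deriv_frechet:
  assumes "g differentiable (at y)"
  shows "((\<lambda>s. g (y + s *\<^sub>R v)) has_real_derivative (frechet_derivative g (at y) v)) (at 0)"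
proof -
  have g: "(g has_derivative frechet_derivative g (at y)) (at y)"
    using assms frechet_derivative_works by blast
  have l: "((\<lambda>s::real. y + s *\<^sub>R v) has_derivative (\<lambda>s. s *\<^sub>R v)) (at 0)"
    by (auto intro!: derivative_eq_intros)
  have "((\<lambda>s. g (y + s *\<^sub>R v)) has_derivative (\<lambda>s. frechet_derivative g (at y) (s *\<^sub>R v))) (at 0)"
    using has_derivative_compose[OF l, of g] g by simp
  moreover have "linear (frechet_derivative g (at y))"
    using assms linear_frechet_derivative by blast
  ultimately show ?thesis
    by (intro has_derivative_imp_has_field_derivative) (auto simp: linear_scale)
qed

lemma pd_frechet:
  assumes "g differentiable (at y)"
  shows "pd g y i = frechet_derivative g (at y) (axis i 1)"
  unfolding pd_def using dir_deriv_frechet[OF assms] by (rule DERIV_imp_deriv)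

lemma frechet_expand:
  assumes "g differentiable (at y)"
  shows "frechet_derivative g (at y) v = (\<Sum>i\<in>UNIV. v $ i * pd g y i)"
proof -
  have lin: "linear (frechet_derivative g (at y))"
    using assms linear_frechet_derivative by blast
  have "frechet_derivative g (at y) v = frechet_derivative g (at y) (\<Sum>i\<in>UNIV. v $ i *\<^sub>R axis i 1)"
    using basis_expansion[of v] by (simp add: scalar_mult_eq_scaleR)
  also have "\<dots> = (\<Sum>i\<in>UNIV. v $ i * frechet_derivative g (at y) (axis i 1))"
    using lin by (simp add: linear_sum linear_scale)
  finally show ?thesis using pd_frechet[OF assms] by simp
qed

lemma dir_deriv:
  assumes "g differentiable (at y)"
  shows "((\<lambda>s. g (y + s *\<^sub>R v)) has_real_derivative (\<Sum>i\<in>UNIV. v $ i * pd g y i)) (at 0)"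
  using dir_deriv_frechet[OF assms] frechet_expand[OF assms] by simp

lemma pd_deriv:
  assumes "g differentiable (at y)"
  shows "((\<lambda>s. g (y + s *\<^sub>R axis j 1)) has_real_derivative pd g y j) (at 0)"
  using dir_deriv_frechet[OF assms] pd_frechet[OF assms] by simp

lemma hom_poly_pd_outside:
  assumes "hom_poly d S g" "j \<notin> S"
  shows "pd g y j = 0"
proof -
  have "(\<lambda>s. g (y + s *\<^sub>R axis j 1)) = (\<lambda>s. g y)"
  proof
    fix s show "g (y + s *\<^sub>R axis j 1) = g y"
      using assms(2) by (intro hom_poly_local[OF assms(1)]) (auto simp: axis_def)
  qed
  then show ?thesis unfolding pd_def by simp
qed

lemma hom_poly_pd_local:
  assumes "hom_poly d S g" "\<forall>i\<in>S. y $ i = y' $ i"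
  shows "pd g y j = pd g y' j"
proof -
  have "(\<lambda>s. g (y + s *\<^sub>R axis j 1)) = (\<lambda>s. g (y' + s *\<^sub>R axis j 1))"
    using hom_poly_local[OF assms(1)] assms(2) by auto
  then show ?thesis unfolding pd_def by simp
qed

lemma hom_poly_euler:
  assumes "hom_poly d S g"
  shows "(\<Sum>i\<in>S. y $ i * pd g y i) = d * g y"
proof -
  have D: "((\<lambda>s. g (y + s *\<^sub>R y)) has_real_derivative (\<Sum>i\<in>UNIV. y $ i * pd g y i)) (at 0)"
    by (rule dir_deriv[OF hom_poly_differentiable[OF assms]])
  have e: "(\<lambda>s. g (y + s *\<^sub>R y)) = (\<lambda>s. (1 + s) ^ d * g y)"
  proof
    fix s
    have "y + s *\<^sub>R y = (1 + s) *\<^sub>R y" by (simp add: algebra_simps)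
    then show "g (y + s *\<^sub>R y) = (1 + s) ^ d * g y" using hom_poly_homog[OF assms] by simp
  qed
  have "((\<lambda>s. (1 + s) ^ d * g y) has_real_derivative (d * g y)) (at 0)"
    by (auto intro!: derivative_eq_intros)
  then have "(\<Sum>i\<in>UNIV. y $ i * pd g y i) = d * g y"
    using D e DERIV_unique by metis
  moreover have "(\<Sum>i\<in>UNIV. y $ i * pd g y i) = (\<Sum>i\<in>S. y $ i * pd g y i)"
    using hom_poly_pd_outside[OF assms] by (intro sum.mono_neutral_right) auto
  ultimately show ?thesis by simp
qed


lemma mono_of_split:
  "mono_of is (y::real^'n::finite) = (y $ m) ^ length (filter (\<lambda>i. i = m) is) * mono_of (filter (\<lambda>i. i \<noteq> m) is) y"
  by (induction "is") (auto simp: mono_of_def algebra_simps)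

lemma length_filter_split: "length (filter (\<lambda>i. i = m) is) + length (filter (\<lambda>i. i \<noteq> m) is) = length is"
  by (induction "is") auto

lemma hom_poly_decomp:
  assumes "hom_poly d S g" "m \<in> S"
  shows "\<exists>C. (\<forall>j\<le>d. hom_poly (d - j) (S - {m}) (C j)) \<and> (\<forall>y. g y = (\<Sum>j\<le>d. (y $ m) ^ j * C j y))"
  using assms(1)
proof (induction rule: hom_poly_induct)
  case zero
  show ?case by (rule exI[of _ "\<lambda>_ _. 0"]) (simp add: hom_poly_zero)
next
  case (add g h)
  from add.IH obtain C1 C2 where
    c1: "\<forall>j\<le>d. hom_poly (d - j) (S - {m}) (C1 j)" "\<forall>y. g y = (\<Sum>j\<le>d. (y $ m) ^ j * C1 j y)" and
    c2: "\<forall>j\<le>d. hom_poly (d - j) (S - {m}) (C2 j)" "\<forall>y. h y = (\<Sum>j\<le>d. (y $ m) ^ j * C2 j y)"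
    by blast
  show ?case
    apply (rule exI[of _ "\<lambda>j y. C1 j y + C2 j y"])
    using c1 c2 by (auto intro: hom_poly_add simp: sum.distrib distrib_left)
next
  case (smult a g)
  from smult.IH obtain C1 where
    c1: "\<forall>j\<le>d. hom_poly (d - j) (S - {m}) (C1 j)" "\<forall>y. g y = (\<Sum>j\<le>d. (y $ m) ^ j * C1 j y)"
    by blast
  show ?case
    apply (rule exI[of _ "\<lambda>j y. a * C1 j y"])
    using c1 by (auto intro: hom_poly_smult simp: sum_distrib_left algebra_simps)
next
  case (mono "is")
  define c where "c = length (filter (\<lambda>i. i = m) is)"
  define js where "js = filter (\<lambda>i. i \<noteq> m) is"
  have lc: "c + length js = d" using length_filter_split[of m "is"] mono unfolding c_def js_def by simp
  have hj: "hom_poly (d - c) (S - {m}) (mono_of js)"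
    using mono lc unfolding js_def by (intro hom_poly_mono_of) auto
  show ?case
  proof (rule exI[of _ "\<lambda>j. if j = c then mono_of js else (\<lambda>_. 0)"], intro conjI allI impI)
    fix j assume "j \<le> d"
    then show "hom_poly (d - j) (S - {m}) (if j = c then mono_of js else (\<lambda>_. 0))"
      using hj by (auto simp: hom_poly_zero)
  next
    fix y
    have "(\<Sum>j\<le>d. (y $ m) ^ j * (if j = c then mono_of js else (\<lambda>_. 0)) y)
        = (\<Sum>j\<le>d. if j = c then (y $ m) ^ j * mono_of js y else 0)"
      by (intro sum.cong) auto
    also have "\<dots> = (y $ m) ^ c * mono_of js y" using lc by (simp add: sum.delta)
    also have "\<dots> = mono_of is y" using mono_of_split[of "is" y m] unfolding c_def js_def by simp
    finally show "mono_of is y = (\<Sum>j\<le>d. (y $ m) ^ j * (if j = c then mono_of js else (\<lambda>_. 0)) y)" by simp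
  qed
qed


lemma orth_norm:
  assumes "orthogonal_matrix (U::real^'n::finite^'n)"
  shows "norm (U *v x) = norm x"
proof -
  have "orthogonal_transformation (\<lambda>x. U *v x)"
    using assms by (simp add: orthogonal_transformation_matrix matrix_of_matrix_vector_mul)
  then show ?thesis by (rule orthogonal_transformation_norm)
qed

lemma norm_sq_sum: "(norm (x::real^'n::finite))^2 = (\<Sum>i\<in>UNIV. (x $ i)^2)"
proof -
  have "(norm x)^2 = x \<bullet> x" by (rule power2_norm_eq_inner)
  also have "\<dots> = (\<Sum>i\<in>UNIV. (x $ i)^2)" by (simp add: inner_vec_def power2_eq_square)
  finally show ?thesis .
qed

lemma orth_inv:
  assumes "orthogonal_matrix (U::real^'n::finite^'n)"
  shows "U *v (transpose U *v y) = y"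
  using assms by (metis matrix_vector_mul_assoc matrix_vector_mul_lid orthogonal_matrix_def)

lemma coord_differentiable: "(\<lambda>y::real^'n::finite. y $ i) differentiable (at y)"
  by (rule bounded_linear_imp_differentiable) (rule bounded_linear_vec_nth)

lemma sum_quad_sq:
  fixes t :: real
  shows "(\<Sum>j\<in>A. (a j * t^2 + b j * t + c j)^2) =
    t^4 * (\<Sum>j\<in>A. (a j)^2) + t^3 * (2 * (\<Sum>j\<in>A. a j * b j)) + t^2 * ((\<Sum>j\<in>A. (b j)^2) + 2 * (\<Sum>j\<in>A. a j * c j))
    + t * (2 * (\<Sum>j\<in>A. b j * c j)) + (\<Sum>j\<in>A. (c j)^2)"
proof -
  have "\<And>j. (a j * t^2 + b j * t + c j)^2 = t^4 * (a j)^2 + t^3 * (2 * (a j * b j)) + t^2 * ((b j)^2 + 2 * (a j * c j))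
    + t * (2 * (b j * c j)) + (c j)^2"
    by (simp add: power2_eq_square power3_eq_cube power4_eq_xxxx algebra_simps)
  then show ?thesis
    by (simp add: sum.distrib sum_distrib_left[symmetric] distrib_left)
qed

lemma poly6_zero:
  fixes c0 c1 c2 c3 c4 c5 c6 :: real
  assumes "\<forall>t. c0 + c1 * t + c2 * t^2 + c3 * t^3 + c4 * t^4 + c5 * t^5 + c6 * t^6 = 0"
  shows "c0 = 0 \<and> c1 = 0 \<and> c2 = 0 \<and> c3 = 0 \<and> c4 = 0 \<and> c5 = 0 \<and> c6 = 0"
proof -
  let ?c = "\<lambda>i. [c0, c1, c2, c3, c4, c5, c6] ! i"
  have "\<forall>t. (\<Sum>i\<le>6. ?c i * t^i) = 0"
  proof
    fix t :: real
    have "(\<Sum>i\<le>6. ?c i * t^i) = c0 + c1 * t + c2 * t^2 + c3 * t^3 + c4 * t^4 + c5 * t^5 + c6 * t^6"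
      by (simp add: numeral_eq_Suc atMost_Suc)
    then show "(\<Sum>i\<le>6. ?c i * t^i) = 0" using assms by simp
  qed
  then have "\<forall>i\<le>6. ?c i = 0" by (subst (asm) polyfun_eq_0)
  then have h: "\<And>i. i \<le> 6 \<Longrightarrow> ?c i = 0" by blast
  show ?thesis using h[of 0] h[of 1] h[of 2] h[of 3] h[of 4] h[of 5] h[of 6]
    by (simp add: numeral_eq_Suc)
qed


locale eik =
  fixes f :: "real^'n::finite \<Rightarrow> real" and Q :: "real^'n^'n" and P R :: "'n set" and k :: 'n
    and \<psi> \<theta> :: "real^'n \<Rightarrow> real"
  assumes orth: "orthogonal_matrix Q" and disj: "P \<inter> R = {}" and kP: "k \<notin> P" and kR: "k \<notin> R"
    and cover: "P \<union> R \<union> {k} = UNIV"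
    and hpsi: "hom_poly 3 (P \<union> R) \<psi>" and hth: "hom_poly 4 (P \<union> R) \<theta>"
    and feq: "\<forall>x. let y = Q *v x in
            f x = (y$k)^4 + 2 * ((\<Sum>i\<in>P. (y$i)^2) - 3 * (\<Sum>i\<in>R. (y$i)^2)) * (y$k)^2
                  + 8 * \<psi> y * y$k + \<theta> y"
    and eikf: "\<forall>x. (norm (grad f x))^2 = 16 * (norm x)^6"
begin

definition F where
  "F y = (y$k)^4 + 2 * ((\<Sum>i\<in>P. (y$i)^2) - 3 * (\<Sum>i\<in>R. (y$i)^2)) * (y$k)^2 + 8 * \<psi> y * y$k + \<theta> y"

lemma f_F: "f x = F (Q *v x)"
  using feq by (simp add: Let_def F_def)

lemma F_diff: "F differentiable (at y)"
proof -
  have "F = (\<lambda>y. (y$k)^4 + 2 * ((\<Sum>i\<in>P. (y$i)^2) - 3 * (\<Sum>i\<in>R. (y$i)^2)) * (y$k)^2 + 8 * \<psi> y * y$k + \<theta> y)"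
    by (rule ext) (simp add: F_def)
  moreover have "(\<lambda>y. (y$k)^4 + 2 * ((\<Sum>i\<in>P. (y$i)^2) - 3 * (\<Sum>i\<in>R. (y$i)^2)) * (y$k)^2 + 8 * \<psi> y * y$k + \<theta> y)
     differentiable (at y)"
    apply (intro differentiable_add differentiable_mult differentiable_diff differentiable_sum differentiable_power
        differentiable_const coord_differentiable hom_poly_differentiable[OF hpsi] hom_poly_differentiable[OF hth])
    by (auto intro!: differentiable_power coord_differentiable)
  ultimately show ?thesis by simp
qed

lemma finP: "finite P" and finR: "finite R" by auto

lemma eikF: "(\<Sum>j\<in>UNIV. (pd F y j)^2) = 16 * (norm y)^6"
proof -
  define x where "x = transpose Q *v y"
  have yx: "Q *v x = y" unfolding x_def using orth by (rule orth_inv)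
  define w where "w = (\<chi> j. pd F y j)"
  have "grad f x $ i = (transpose Q *v w) $ i" for i
  proof -
    have e: "(\<lambda>s. f (x + s *\<^sub>R axis i 1)) = (\<lambda>s. F (y + s *\<^sub>R (Q *v axis i 1)))"
      by (rule ext) (simp add: f_F yx matrix_vector_right_distrib matrix_vector_mult_scaleR)
    have "grad f x $ i = (\<Sum>j\<in>UNIV. (Q *v axis i 1) $ j * pd F y j)"
      unfolding grad_pd pd_def[of f x i] e by (rule DERIV_imp_deriv[OF dir_deriv[OF F_diff]])
    also have "\<dots> = (\<Sum>j\<in>UNIV. Q $ j $ i * w $ j)"
      by (simp add: w_def matrix_vector_mult_def axis_def if_distrib cong: if_cong)
    also have "\<dots> = (transpose Q *v w) $ i"
      by (simp add: matrix_vector_mult_def transpose_def)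
    finally show ?thesis .
  qed
  then have "grad f x = transpose Q *v w" by (simp add: vec_eq_iff)
  then have "norm (grad f x) = norm w" using orth_norm[of "transpose Q"] orth by simp
  moreover have "norm x = norm y" using orth_norm[OF orth, of x] yx by simp
  ultimately have "(norm w)^2 = 16 * (norm y)^6" using eikf by metis
  then show ?thesis by (simp add: norm_sq_sum w_def)
qed

end


lemma shift_comp: "(y + s *\<^sub>R axis j 1) $ i = y $ i + (if i = j then s else 0)"
  by (simp add: axis_def)

lemma sumsq_deriv:
  assumes "finite A"
  shows "((\<lambda>s. \<Sum>i\<in>A. ((y + s *\<^sub>R axis j 1) $ i)^2) has_real_derivative (if j \<in> A then 2 * y $ j else 0)) (at 0)"
proof -
  have "((\<lambda>s. \<Sum>i\<in>A. ((y + s *\<^sub>R axis j 1) $ i)^2) has_real_derivative (\<Sum>i\<in>A. if i = j then 2 * y $ j else 0)) (at 0)"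
  proof (rule DERIV_sum)
    fix i assume "i \<in> A"
    have "((\<lambda>s. (y $ i + s * (if i = j then 1 else 0))^2) has_real_derivative (2 * (y $ i + 0 * (if i = j then 1 else 0)) * (if i = j then 1 else 0))) (at 0)"
      by (auto intro!: derivative_eq_intros)
    then show "((\<lambda>s. ((y + s *\<^sub>R axis j 1) $ i)^2) has_real_derivative (if i = j then 2 * y $ j else 0)) (at 0)"
      by (cases "i = j") (auto simp: axis_def)
  qed
  then show ?thesis using assms by (simp add: sum.delta')
qed

context eik begin

lemma pdF_general:
  "pd F y j = 4 * (y$k)^3 * (if j = k then 1 else 0)
     + 2 * ((if j \<in> P then 2 * y $ j else 0) - 3 * (if j \<in> R then 2 * y $ j else 0)) * (y$k)^2
     + 2 * ((\<Sum>i\<in>P. (y$i)^2) - 3 * (\<Sum>i\<in>R. (y$i)^2)) * (2 * y$k * (if j = k then 1 else 0))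
     + 8 * (pd \<psi> y j * y$k + \<psi> y * (if j = k then 1 else 0)) + pd \<theta> y j"
proof -
  have ek: "(\<lambda>s. (y + s *\<^sub>R axis j 1) $ k) = (\<lambda>s. y $ k + s * (if j = k then 1 else 0))"
    by (rule ext) (auto simp: axis_def)
  have dk: "((\<lambda>s. (y + s *\<^sub>R axis j 1) $ k) has_real_derivative (if j = k then 1 else 0)) (at 0)"
    unfolding ek by (auto intro!: derivative_eq_intros)
  have vk: "(\<lambda>s. (y + s *\<^sub>R axis j 1) $ k) 0 = y $ k" by simp
  note dP = sumsq_deriv[OF finP, of y j] and dR = sumsq_deriv[OF finR, of y j]
  note dpsi = pd_deriv[OF hom_poly_differentiable[OF hpsi], of y j]
  note dth = pd_deriv[OF hom_poly_differentiable[OF hth], of y j]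
  have "((\<lambda>s. F (y + s *\<^sub>R axis j 1)) has_real_derivative
     (4 * (y$k)^3 * (if j = k then 1 else 0)
     + 2 * ((if j \<in> P then 2 * y $ j else 0) - 3 * (if j \<in> R then 2 * y $ j else 0)) * (y$k)^2
     + 2 * ((\<Sum>i\<in>P. (y$i)^2) - 3 * (\<Sum>i\<in>R. (y$i)^2)) * (2 * y$k * (if j = k then 1 else 0))
     + 8 * (pd \<psi> y j * y$k + \<psi> y * (if j = k then 1 else 0)) + pd \<theta> y j)) (at 0)"
    unfolding F_def
    apply (rule dk dP dR dpsi dth derivative_eq_intros | simp)+
    done
  then show ?thesis unfolding pd_def by (rule DERIV_imp_deriv)
qed

end


context eik begin

lemma UNIV_split: "UNIV = insert k (P \<union> R)" using cover by auto

lemma kPR: "k \<notin> P \<union> R" using kP kR by auto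

lemma pd_psi_k: "pd \<psi> y k = 0" using hom_poly_pd_outside[OF hpsi kPR] .
lemma pd_th_k: "pd \<theta> y k = 0" using hom_poly_pd_outside[OF hth kPR] .

lemma pdF_k: "pd F y k = 4 * (y$k)^3 + 4 * ((\<Sum>i\<in>P. (y$i)^2) - 3 * (\<Sum>i\<in>R. (y$i)^2)) * y$k + 8 * \<psi> y"
  using pdF_general[of y k] kP kR pd_psi_k pd_th_k by (simp add: algebra_simps)

lemma pdF_P: assumes "j \<in> P" shows "pd F y j = (4 * y$j) * (y$k)^2 + (8 * pd \<psi> y j) * y$k + pd \<theta> y j"
proof -
  have "j \<noteq> k" "j \<notin> R" using assms kP disj by auto
  then show ?thesis using pdF_general[of y j] assms by (simp add: algebra_simps)
qed

lemma pdF_R: assumes "j \<in> R" shows "pd F y j = (-12 * y$j) * (y$k)^2 + (8 * pd \<psi> y j) * y$k + pd \<theta> y j"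
proof -
  have "j \<noteq> k" "j \<notin> P" using assms kR disj by auto
  then show ?thesis using pdF_general[of y j] assms by (simp add: algebra_simps)
qed

lemma sum_sq_split: "(\<Sum>j\<in>UNIV. g j) = g k + (\<Sum>j\<in>P. g j) + (\<Sum>j\<in>R. g j)"
proof -
  have "(\<Sum>j\<in>UNIV. g j) = g k + (\<Sum>j\<in>P \<union> R. g j)"
    unfolding UNIV_split using kPR by (simp add: finite_UnI)
  also have "(\<Sum>j\<in>P \<union> R. g j) = (\<Sum>j\<in>P. g j) + (\<Sum>j\<in>R. g j)"
    using disj by (simp add: sum.union_disjoint)
  finally show ?thesis by (simp add: add.assoc)
qed

lemma coeffs:
  assumes zk: "z $ k = 0"
  defines "SP \<equiv> (\<Sum>i\<in>P. (z$i)^2)" and "SR \<equiv> (\<Sum>i\<in>R. (z$i)^2)"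
  shows "64 * \<psi> z + 64 * (\<Sum>j\<in>P. z$j * pd \<psi> z j) - 192 * (\<Sum>j\<in>R. z$j * pd \<psi> z j) = 0"
    and "16 * (SP - 3 * SR)^2 + 64 * (\<Sum>j\<in>P. (pd \<psi> z j)^2) + 64 * (\<Sum>j\<in>R. (pd \<psi> z j)^2)
         + 8 * (\<Sum>j\<in>P. z$j * pd \<theta> z j) - 24 * (\<Sum>j\<in>R. z$j * pd \<theta> z j) = 48 * (SP + SR)^2"
    and "64 * (SP - 3 * SR) * \<psi> z + 16 * (\<Sum>j\<in>P. pd \<psi> z j * pd \<theta> z j) + 16 * (\<Sum>j\<in>R. pd \<psi> z j * pd \<theta> z j) = 0"
    and "64 * (\<psi> z)^2 + (\<Sum>j\<in>P. (pd \<theta> z j)^2) + (\<Sum>j\<in>R. (pd \<theta> z j)^2) = 16 * (SP + SR)^3"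
proof -
  define a where "a = (\<lambda>j. 4 * z$j)"
  define a' where "a' = (\<lambda>j. -12 * z$j)"
  define b where "b = (\<lambda>j. 8 * pd \<psi> z j)"
  define c where "c = (\<lambda>j. pd \<theta> z j)"
  define A where "A = SP - 3 * SR"
  define p where "p = \<psi> z"
  have E: "(4 * t^3 + 4 * A * t + 8 * p)^2
    + (t^4 * (\<Sum>j\<in>P. (a j)^2) + t^3 * (2 * (\<Sum>j\<in>P. a j * b j)) + t^2 * ((\<Sum>j\<in>P. (b j)^2) + 2 * (\<Sum>j\<in>P. a j * c j))
    + t * (2 * (\<Sum>j\<in>P. b j * c j)) + (\<Sum>j\<in>P. (c j)^2))
    + (t^4 * (\<Sum>j\<in>R. (a' j)^2) + t^3 * (2 * (\<Sum>j\<in>R. a' j * b j)) + t^2 * ((\<Sum>j\<in>R. (b j)^2) + 2 * (\<Sum>j\<in>R. a' j * c j))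
    + t * (2 * (\<Sum>j\<in>R. b j * c j)) + (\<Sum>j\<in>R. (c j)^2))
    = 16 * (t^2 + (SP + SR))^3" for t
  proof -
    define y where "y = z + t *\<^sub>R axis k 1"
    have yk: "y $ k = t" using zk by (simp add: y_def)
    have yi: "i \<noteq> k \<Longrightarrow> y $ i = z $ i" for i by (simp add: y_def axis_def)
    have loc: "\<forall>i\<in>P \<union> R. y $ i = z $ i" using yi kPR by metis
    have sP: "(\<Sum>i\<in>P. (y$i)^2) = SP" unfolding SP_def using loc by (intro sum.cong) auto
    have sR: "(\<Sum>i\<in>R. (y$i)^2) = SR" unfolding SR_def using loc by (intro sum.cong) auto
    have psi: "\<psi> y = p" unfolding p_def using hom_poly_local[OF hpsi loc] .
    have dpsi: "pd \<psi> y j = pd \<psi> z j" for j using hom_poly_pd_local[OF hpsi loc] .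
    have dth: "pd \<theta> y j = pd \<theta> z j" for j using hom_poly_pd_local[OF hth loc] .
    have k: "pd F y k = 4 * t^3 + 4 * A * t + 8 * p"
      using pdF_k[of y] yk sP sR psi unfolding A_def by simp
    have hP: "(\<Sum>j\<in>P. (pd F y j)^2) = (\<Sum>j\<in>P. (a j * t^2 + b j * t + c j)^2)"
      by (intro sum.cong refl) (simp add: pdF_P yk yi dpsi dth a_def b_def c_def kP, metis kP yi)
    have hR: "(\<Sum>j\<in>R. (pd F y j)^2) = (\<Sum>j\<in>R. (a' j * t^2 + b j * t + c j)^2)"
      by (intro sum.cong refl) (simp add: pdF_R yk dpsi dth a'_def b_def c_def, metis kR yi)
    have n: "(norm y)^2 = t^2 + (SP + SR)"
      using norm_sq_sum[of y] sum_sq_split[of "\<lambda>i. (y$i)^2"] yk sP sR by simp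
    have "(norm y)^6 = ((norm y)^2)^3" by (simp add: power_mult[symmetric])
    then have "16 * (norm y)^6 = 16 * (t^2 + (SP + SR))^3" using n by simp
    moreover have "(\<Sum>j\<in>UNIV. (pd F y j)^2) = (pd F y k)^2 + (\<Sum>j\<in>P. (pd F y j)^2) + (\<Sum>j\<in>R. (pd F y j)^2)"
      by (rule sum_sq_split)
    ultimately show ?thesis using eikF[of y] k hP hR sum_quad_sq[of a t b c P] sum_quad_sq[of a' t b c R] by simp
  qed
  define N where "N = SP + SR"
  have "\<forall>t. (64 * p^2 + (\<Sum>j\<in>P. (c j)^2) + (\<Sum>j\<in>R. (c j)^2) - 16 * N^3)
     + (64 * A * p + 2 * (\<Sum>j\<in>P. b j * c j) + 2 * (\<Sum>j\<in>R. b j * c j)) * t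
     + (16 * A^2 + (\<Sum>j\<in>P. (b j)^2) + 2 * (\<Sum>j\<in>P. a j * c j) + (\<Sum>j\<in>R. (b j)^2) + 2 * (\<Sum>j\<in>R. a' j * c j) - 48 * N^2) * t^2
     + (64 * p + 2 * (\<Sum>j\<in>P. a j * b j) + 2 * (\<Sum>j\<in>R. a' j * b j)) * t^3
     + (32 * A + (\<Sum>j\<in>P. (a j)^2) + (\<Sum>j\<in>R. (a' j)^2) - 48 * N) * t^4 + 0 * t^5 + 0 * t^6 = 0"
  proof
    fix t
    show "(64 * p^2 + (\<Sum>j\<in>P. (c j)^2) + (\<Sum>j\<in>R. (c j)^2) - 16 * N^3)
     + (64 * A * p + 2 * (\<Sum>j\<in>P. b j * c j) + 2 * (\<Sum>j\<in>R. b j * c j)) * t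
     + (16 * A^2 + (\<Sum>j\<in>P. (b j)^2) + 2 * (\<Sum>j\<in>P. a j * c j) + (\<Sum>j\<in>R. (b j)^2) + 2 * (\<Sum>j\<in>R. a' j * c j) - 48 * N^2) * t^2
     + (64 * p + 2 * (\<Sum>j\<in>P. a j * b j) + 2 * (\<Sum>j\<in>R. a' j * b j)) * t^3
     + (32 * A + (\<Sum>j\<in>P. (a j)^2) + (\<Sum>j\<in>R. (a' j)^2) - 48 * N) * t^4 + 0 * t^5 + 0 * t^6 = 0"
      using E[of t] unfolding N_def by algebra
  qed
  from poly6_zero[OF this]
  have C0: "64 * p^2 + (\<Sum>j\<in>P. (c j)^2) + (\<Sum>j\<in>R. (c j)^2) - 16 * N^3 = 0"
    and C1: "64 * A * p + 2 * (\<Sum>j\<in>P. b j * c j) + 2 * (\<Sum>j\<in>R. b j * c j) = 0"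
    and C2: "16 * A^2 + (\<Sum>j\<in>P. (b j)^2) + 2 * (\<Sum>j\<in>P. a j * c j) + (\<Sum>j\<in>R. (b j)^2) + 2 * (\<Sum>j\<in>R. a' j * c j) - 48 * N^2 = 0"
    and C3: "64 * p + 2 * (\<Sum>j\<in>P. a j * b j) + 2 * (\<Sum>j\<in>R. a' j * b j) = 0"
    by blast+
  have s1: "(\<Sum>j\<in>P. a j * b j) = 32 * (\<Sum>j\<in>P. z$j * pd \<psi> z j)"
    unfolding a_def b_def by (simp add: sum_distrib_left mult_ac)
  have s2: "(\<Sum>j\<in>R. a' j * b j) = -96 * (\<Sum>j\<in>R. z$j * pd \<psi> z j)"
    unfolding a'_def b_def by (simp add: sum_distrib_left mult_ac)
  show "64 * \<psi> z + 64 * (\<Sum>j\<in>P. z$j * pd \<psi> z j) - 192 * (\<Sum>j\<in>R. z$j * pd \<psi> z j) = 0"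
    using C3 s1 s2 unfolding p_def by simp
  have s3: "(\<Sum>j\<in>P. (b j)^2) = 64 * (\<Sum>j\<in>P. (pd \<psi> z j)^2)"
    "(\<Sum>j\<in>R. (b j)^2) = 64 * (\<Sum>j\<in>R. (pd \<psi> z j)^2)"
    unfolding b_def by (simp_all add: sum_distrib_left power_mult_distrib)
  have s4: "(\<Sum>j\<in>P. a j * c j) = 4 * (\<Sum>j\<in>P. z$j * pd \<theta> z j)"
    "(\<Sum>j\<in>R. a' j * c j) = -12 * (\<Sum>j\<in>R. z$j * pd \<theta> z j)"
    unfolding a_def a'_def c_def by (simp_all add: sum_distrib_left mult_ac)
  show "16 * (SP - 3 * SR)^2 + 64 * (\<Sum>j\<in>P. (pd \<psi> z j)^2) + 64 * (\<Sum>j\<in>R. (pd \<psi> z j)^2)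
         + 8 * (\<Sum>j\<in>P. z$j * pd \<theta> z j) - 24 * (\<Sum>j\<in>R. z$j * pd \<theta> z j) = 48 * (SP + SR)^2"
    using C2 s3 s4 unfolding A_def N_def by simp
  have s5: "(\<Sum>j\<in>P. b j * c j) = 8 * (\<Sum>j\<in>P. pd \<psi> z j * pd \<theta> z j)"
    "(\<Sum>j\<in>R. b j * c j) = 8 * (\<Sum>j\<in>R. pd \<psi> z j * pd \<theta> z j)"
    unfolding b_def c_def by (simp_all add: sum_distrib_left mult_ac)
  show "64 * (SP - 3 * SR) * \<psi> z + 16 * (\<Sum>j\<in>P. pd \<psi> z j * pd \<theta> z j) + 16 * (\<Sum>j\<in>R. pd \<psi> z j * pd \<theta> z j) = 0"
    using C1 s5 unfolding A_def p_def by simp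
  show "64 * (\<psi> z)^2 + (\<Sum>j\<in>P. (pd \<theta> z j)^2) + (\<Sum>j\<in>R. (pd \<theta> z j)^2) = 16 * (SP + SR)^3"
    using C0 unfolding c_def p_def N_def by simp
qed

end


lemma proj_onto_eq:
  assumes H: "\<forall>u\<in>H. \<forall>v\<in>H. u - v \<in> H" and p: "p \<in> H" and o: "\<forall>h\<in>H. (x - p) \<bullet> h = 0"
  shows "proj_onto H x = p"
  unfolding proj_onto_def
proof (rule the_equality)
  show "p \<in> H \<and> (\<forall>h\<in>H. (x - p) \<bullet> h = 0)" using p o by blast
next
  fix p' assume p': "p' \<in> H \<and> (\<forall>h\<in>H. (x - p') \<bullet> h = 0)"
  then have "p - p' \<in> H" using H p by blast
  then have "(x - p) \<bullet> (p - p') = 0" "(x - p') \<bullet> (p - p') = 0" using o p' by blast+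
  then have "(p - p') \<bullet> (p - p') = 0" by (simp add: inner_diff_left)
  then show "p' = p" by simp
qed

lemma h4_UNIV: "h4 UNIV x = (norm x)^4"
proof -
  have "proj_onto UNIV x = x" by (rule proj_onto_eq) auto
  then show ?thesis by (simp add: h4_def Let_def)
qed

lemma subspace_UNIV': "subspace (UNIV :: (real^'n::finite) set)" by (rule subspace_UNIV)

lemma pd_zero_fun: "(\<forall>y. g y = 0) \<Longrightarrow> pd g y j = 0"
proof -
  assume "\<forall>y. g y = 0"
  then have "(\<lambda>s. g (y + s *\<^sub>R axis j 1)) = (\<lambda>s. 0)" by auto
  then show ?thesis unfolding pd_def by simp
qed

lemma h4_eq:
  assumes "proj_onto H y = p"
  shows "h4 H y = ((norm p)^2)^2 - 6 * (norm p)^2 * (norm (y - p))^2 + ((norm (y - p))^2)^2"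
  using assms by (simp add: h4_def Let_def power_mult[symmetric])

context eik begin

definition zk :: "real^'n \<Rightarrow> real^'n" where "zk y = (\<chi> i. if i = k then 0 else y $ i)"

lemma zk_k: "zk y $ k = 0" by (simp add: zk_def)
lemma zk_loc: "\<forall>i\<in>P \<union> R. zk y $ i = y $ i" using kPR by (auto simp: zk_def)
lemma psi_zk: "\<psi> (zk y) = \<psi> y" using hom_poly_local[OF hpsi zk_loc] .
lemma th_zk: "\<theta> (zk y) = \<theta> y" using hom_poly_local[OF hth zk_loc] .
lemma sumP_zk: "(\<Sum>i\<in>P. (zk y $ i)^2) = (\<Sum>i\<in>P. (y $ i)^2)" using zk_loc by (intro sum.cong) auto
lemma sumR_zk: "(\<Sum>i\<in>R. (zk y $ i)^2) = (\<Sum>i\<in>R. (y $ i)^2)" using zk_loc by (intro sum.cong) auto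

lemma euler_psi: "(\<Sum>j\<in>P. z$j * pd \<psi> z j) + (\<Sum>j\<in>R. z$j * pd \<psi> z j) = 3 * \<psi> z"
  using hom_poly_euler[OF hpsi, of z] disj by (simp add: sum.union_disjoint)
lemma euler_th: "(\<Sum>j\<in>P. z$j * pd \<theta> z j) + (\<Sum>j\<in>R. z$j * pd \<theta> z j) = 4 * \<theta> z"
  using hom_poly_euler[OF hth, of z] disj by (simp add: sum.union_disjoint)

lemma normsq: "(norm y)^2 = (y$k)^2 + (\<Sum>i\<in>P. (y$i)^2) + (\<Sum>i\<in>R. (y$i)^2)"
  using norm_sq_sum[of y] sum_sq_split[of "\<lambda>i. (y$i)^2"] by simp

lemma psi_zero_if: "(\<And>z. z $ k = 0 \<Longrightarrow> \<psi> z = 0) \<Longrightarrow> \<psi> y = 0"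
  using psi_zk zk_k by metis

lemma caseR0:
  assumes R0: "R = {}"
  shows "primitive f"
proof -
  have psi0: "\<psi> z = 0" if "z $ k = 0" for z
    using coeffs(1)[OF that] euler_psi[of z] R0 by simp
  have psi0': "\<psi> y = 0" for y using psi_zero_if psi0 by blast
  have dpsi0: "pd \<psi> y j = 0" for y j using pd_zero_fun psi0' by blast
  have th: "\<theta> z = (\<Sum>i\<in>P. (z$i)^2)^2" if "z $ k = 0" for z
    using coeffs(2)[OF that] euler_th[of z] R0 dpsi0 by simp
  have th': "\<theta> y = (\<Sum>i\<in>P. (y$i)^2)^2" for y
    using th[OF zk_k, of y] th_zk sumP_zk by simp
  have "f x = (norm x)^4" for x
  proof -
    define y where "y = Q *v x"
    have "f x = F y" unfolding y_def by (rule f_F)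
    also have "\<dots> = ((y$k)^2 + (\<Sum>i\<in>P. (y$i)^2))^2"
      unfolding F_def using R0 psi0' th' by (simp add: power2_eq_square power4_eq_xxxx algebra_simps)
    also have "\<dots> = (norm y)^4"
    proof -
      have "(norm y)^4 = ((norm y)^2)^2" by (simp add: power_mult[symmetric])
      then show ?thesis using normsq[of y] R0 by simp
    qed
    also have "norm y = norm x" unfolding y_def by (rule orth_norm[OF orth])
    finally show ?thesis .
  qed
  then show ?thesis unfolding primitive_def
    by (intro exI[of _ UNIV] exI[of _ "mat 1"] exI[of _ 1]) (simp add: h4_UNIV subspace_UNIV orthogonal_matrix_id)
qed

lemma caseP0:
  assumes P0: "P = {}"
  shows "primitive f"
proof -
  have psi0: "\<psi> z = 0" if "z $ k = 0" for z
    using coeffs(1)[OF that] euler_psi[of z] P0 by simp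
  have psi0': "\<psi> y = 0" for y using psi_zero_if psi0 by blast
  have dpsi0: "pd \<psi> y j = 0" for y j using pd_zero_fun psi0' by blast
  have th: "\<theta> z = (\<Sum>i\<in>R. (z$i)^2)^2" if "z $ k = 0" for z
    using coeffs(2)[OF that] euler_th[of z] P0 dpsi0 by (simp add: power2_eq_square algebra_simps)
  have th': "\<theta> y = (\<Sum>i\<in>R. (y$i)^2)^2" for y
    using th[OF zk_k, of y] th_zk sumR_zk by simp
  define H where "H = {v::real^'n. \<forall>i. i \<noteq> k \<longrightarrow> v $ i = 0}"
  have sH: "subspace H" unfolding subspace_def H_def by auto
  have "f x = h4 H (Q *v x)" for x
  proof -
    define y where "y = Q *v x"
    define p where "p = (\<chi> i. if i = k then y $ i else 0)"
    have pr: "proj_onto H y = p"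
    proof (rule proj_onto_eq)
      show "\<forall>u\<in>H. \<forall>v\<in>H. u - v \<in> H" unfolding H_def by auto
      show "p \<in> H" unfolding H_def p_def by auto
      show "\<forall>h\<in>H. (y - p) \<bullet> h = 0"
      proof
        fix h assume "h \<in> H"
        then have "\<forall>i. i \<noteq> k \<longrightarrow> h $ i = 0" unfolding H_def by auto
        then show "(y - p) \<bullet> h = 0" unfolding inner_vec_def p_def by (intro sum.neutral) auto
      qed
    qed
    have "(\<Sum>i\<in>R. (p $ i)^2) = 0" using kR by (intro sum.neutral) (auto simp: p_def)
    then have n1: "(norm p)^2 = (y$k)^2" using normsq[of p] P0 by (simp add: p_def)
    have "(\<Sum>i\<in>R. ((y - p) $ i)^2) = (\<Sum>i\<in>R. (y $ i)^2)"
      using kR by (intro sum.cong) (auto simp: p_def)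
    then have n2: "(norm (y - p))^2 = (\<Sum>i\<in>R. (y$i)^2)" using normsq[of "y - p"] P0 by (simp add: p_def)
    have "f x = F y" unfolding y_def by (rule f_F)
    also have "\<dots> = h4 H y"
      unfolding F_def h4_eq[OF pr] n1 n2 using P0 psi0' th'
      by (simp add: power2_eq_square power4_eq_xxxx algebra_simps)
    finally show ?thesis unfolding y_def .
  qed
  then show ?thesis unfolding primitive_def using sH orth
    by (intro exI[of _ H] exI[of _ Q] exI[of _ 1]) simp
qed

end


lemma quad_form:
  assumes "hom_poly 2 S g"
  shows "\<exists>M::'n::finite \<Rightarrow> 'n \<Rightarrow> real. (\<forall>i j. M i j = M j i) \<and> (\<forall>y::real^'n. g y = (\<Sum>i\<in>S. \<Sum>j\<in>S. M i j * (y$i * y$j)))"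
  using assms
proof (induction rule: hom_poly_induct)
  case zero show ?case by (rule exI[of _ "\<lambda>_ _. 0"]) simp
next
  case (add g h)
  then obtain M1 M2 where m1: "\<forall>i j. M1 i j = M1 j i" "\<forall>y. g y = (\<Sum>i\<in>S. \<Sum>j\<in>S. M1 i j * (y$i * y$j))"
    and m2: "\<forall>i j. M2 i j = M2 j i" "\<forall>y. h y = (\<Sum>i\<in>S. \<Sum>j\<in>S. M2 i j * (y$i * y$j))" by blast
  show ?case
  proof (rule exI[of _ "\<lambda>i j. M1 i j + M2 i j"], intro conjI allI)
    fix i j show "M1 i j + M2 i j = M1 j i + M2 j i" using m1(1) m2(1) by metis
  next
    fix y show "g y + h y = (\<Sum>i\<in>S. \<Sum>j\<in>S. (M1 i j + M2 i j) * (y$i * y$j))"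
      using m1(2) m2(2) by (simp add: sum.distrib distrib_right)
  qed
next
  case (smult a g)
  then obtain M1 where m1: "\<forall>i j. M1 i j = M1 j i" "\<forall>y. g y = (\<Sum>i\<in>S. \<Sum>j\<in>S. M1 i j * (y$i * y$j))" by blast
  show ?case
  proof (rule exI[of _ "\<lambda>i j. a * M1 i j"], intro conjI allI)
    fix i j show "a * M1 i j = a * M1 j i" using m1(1) by metis
  next
    fix y show "a * g y = (\<Sum>i\<in>S. \<Sum>j\<in>S. (a * M1 i j) * (y$i * y$j))"
      using m1(2) by (simp add: sum_distrib_left mult.assoc)
  qed
next
  case (mono "is")
  have "length is = Suc (Suc 0)" using mono by simp
  then obtain a b where ab: "is = [a, b]" by (auto simp: length_Suc_conv)
  with mono have aS: "a \<in> S" and bS: "b \<in> S" by auto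
  define M where "M = (\<lambda>i j. ((if i = a \<and> j = b then 1 else 0) + (if i = b \<and> j = a then 1 else 0)) / (2::real))"
  show ?case
  proof (rule exI[of _ M], intro conjI allI)
    fix i j show "M i j = M j i" unfolding M_def by (cases "i = a"; cases "j = b"; cases "i = b"; cases "j = a") simp_all
  next
    fix y :: "real^'n"
    have inner: "(\<Sum>j\<in>S. M i j * (y$i * y$j)) = ((if i = a then y$a * y$b else 0) + (if i = b then y$a * y$b else 0)) / 2" if "i \<in> S" for i
    proof -
      have "(\<Sum>j\<in>S. M i j * (y$i * y$j)) = (\<Sum>j\<in>S. (if j = b then (if i = a then y$a * y$b else 0) / 2 else 0)
                + (if j = a then (if i = b then y$a * y$b else 0) / 2 else 0))"
        unfolding M_def by (intro sum.cong refl) (auto simp: field_simps)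
      also have "\<dots> = ((if i = a then y$a * y$b else 0) + (if i = b then y$a * y$b else 0)) / 2"
        using aS bS by (simp add: sum.distrib add_divide_distrib)
      finally show ?thesis .
    qed
    have "(\<Sum>i\<in>S. \<Sum>j\<in>S. M i j * (y$i * y$j)) = (\<Sum>i\<in>S. ((if i = a then y$a * y$b else 0) + (if i = b then y$a * y$b else 0)) / 2)"
      using inner by (intro sum.cong) auto
    also have "\<dots> = y$a * y$b"
      using aS bS by (simp add: sum.distrib sum_divide_distrib[symmetric])
    finally show "mono_of is y = (\<Sum>i\<in>S. \<Sum>j\<in>S. M i j * (y$i * y$j))" by (simp add: ab mono_of_def)
  qed
qed


lemma quad_roots_finite:
  fixes c0 c1 c2 :: real
  assumes "c0 \<noteq> 0 \<or> c2 \<noteq> 0"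
  shows "finite {s. c0 + c1 * s + c2 * s^2 = 0}"
proof -
  let ?c = "\<lambda>i. [c0, c1, c2] ! i"
  have e: "{s. c0 + c1 * s + c2 * s^2 = 0} = {s. (\<Sum>i\<le>2. ?c i * s^i) = 0}"
    by (simp add: numeral_eq_Suc atMost_Suc algebra_simps)
  have "\<exists>i\<le>2. ?c i \<noteq> 0" using assms by (metis le_refl nth_Cons_0 nth_Cons_Suc numeral_2_eq_2 zero_le)
  then show ?thesis unfolding e using polyfun_finite_roots by blast
qed

locale qf =
  fixes S :: "'n::finite set" and M :: "'n \<Rightarrow> 'n \<Rightarrow> real" and g :: "real^'n \<Rightarrow> real"
  assumes symM: "\<And>i j. M i j = M j i"
    and g_eq: "\<And>y. g y = (\<Sum>i\<in>S. \<Sum>j\<in>S. M i j * (y$i * y$j))"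
begin

definition mv :: "real^'n \<Rightarrow> 'n \<Rightarrow> real" where "mv y j = (\<Sum>l\<in>S. M j l * y$l)"

definition B :: "real^'n \<Rightarrow> real^'n \<Rightarrow> real" where "B a b = (\<Sum>i\<in>S. a$i * mv b i)"

lemma finS: "finite S" by simp

lemma B_sym: "B a b = B b a"
proof -
  have "B a b = (\<Sum>i\<in>S. \<Sum>l\<in>S. M i l * (a$i * b$l))"
    unfolding B_def mv_def by (simp add: sum_distrib_left mult_ac)
  also have "\<dots> = (\<Sum>l\<in>S. \<Sum>i\<in>S. M i l * (a$i * b$l))" by (rule sum.swap)
  also have "\<dots> = B b a"
    unfolding B_def mv_def by (simp add: sum_distrib_left mult_ac symM)
  finally show ?thesis .
qed

lemma g_B: "g y = B y y"
  unfolding g_eq B_def mv_def by (simp add: sum_distrib_left mult_ac)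

lemma B_lin: "B (a + s *\<^sub>R b) c = B a c + s * B b c"
  unfolding B_def by (simp add: algebra_simps sum.distrib sum_distrib_left)

lemma B_lin2: "B c (a + s *\<^sub>R b) = B c a + s * B c b"
  using B_lin B_sym by metis

lemma g_expand: "g (a + s *\<^sub>R b) = g a + 2 * s * B a b + s^2 * g b"
  unfolding g_B B_lin B_lin2 using B_sym[of a b] by (simp add: algebra_simps power2_eq_square)

lemma mv_lin: "mv (a + s *\<^sub>R b) j = mv a j + s * mv b j"
  unfolding mv_def by (simp add: algebra_simps sum.distrib sum_distrib_left)

lemma B_axis: assumes "j \<in> S" shows "B a (axis j 1) = mv a j"
proof -
  have "B a (axis j 1) = (\<Sum>i\<in>S. (axis j 1)$i * mv a i)" using B_sym[of a "axis j 1"] unfolding B_def by simp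
  also have "\<dots> = (\<Sum>i\<in>S. if i = j then mv a i else 0)" by (intro sum.cong) (auto simp: axis_def)
  also have "\<dots> = mv a j" using assms by (simp add: sum.delta')
  finally show ?thesis .
qed

lemma pd_g: assumes "j \<in> S" shows "pd g y j = 2 * mv y j"
proof -
  have e: "(\<lambda>s. g (y + s *\<^sub>R axis j 1)) = (\<lambda>s. g y + 2 * s * mv y j + s^2 * g (axis j 1))"
    using g_expand B_axis[OF assms] by auto
  have "((\<lambda>s. g y + 2 * s * mv y j + s^2 * g (axis j 1)) has_real_derivative 2 * mv y j) (at 0)"
    by (auto intro!: derivative_eq_intros)
  then show ?thesis unfolding pd_def e by (rule DERIV_imp_deriv)
qed

definition D :: "real^'n \<Rightarrow> real" where "D y = (\<Sum>j\<in>S. (mv y j)^2) - (\<Sum>j\<in>S. (y$j)^2)"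
definition E :: "real^'n \<Rightarrow> real^'n \<Rightarrow> real" where
  "E a b = (\<Sum>j\<in>S. mv a j * mv b j) - (\<Sum>j\<in>S. a$j * b$j)"

lemma D_expand: "D (a + s *\<^sub>R b) = D a + 2 * s * E a b + s^2 * D b"
  unfolding D_def E_def mv_lin
  by (simp add: power2_eq_square algebra_simps sum.distrib sum_distrib_left sum_subtractf)

lemma D_zero:
  assumes a: "g a \<noteq> 0" and h: "\<And>y. (g y)^2 * D y = 0"
  shows "D b = 0"
proof (rule ccontr)
  assume nb: "D b \<noteq> 0"
  have f1: "finite {s. g a + (2 * B a b) * s + g b * s^2 = 0}"
    using a by (intro quad_roots_finite) simp
  have f2: "finite {s. D a + (2 * E a b) * s + D b * s^2 = 0}"
    using nb by (intro quad_roots_finite) simp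
  have "UNIV \<subseteq> {s. g a + (2 * B a b) * s + g b * s^2 = 0} \<union> {s. D a + (2 * E a b) * s + D b * s^2 = 0}"
  proof
    fix s :: real
    have "(g (a + s *\<^sub>R b))^2 * D (a + s *\<^sub>R b) = 0" by (rule h)
    then have "g (a + s *\<^sub>R b) = 0 \<or> D (a + s *\<^sub>R b) = 0" by simp
    then show "s \<in> {s. g a + (2 * B a b) * s + g b * s^2 = 0} \<union> {s. D a + (2 * E a b) * s + D b * s^2 = 0}"
      unfolding g_expand D_expand by (auto simp: algebra_simps)
  qed
  then have "finite (UNIV :: real set)" using f1 f2 finite_subset by blast
  then show False using infinite_UNIV_char_0 by blast
qed

lemma E_zero:
  assumes "\<And>y. D y = 0"
  shows "E a b = 0"
  using D_expand[of a 1 b] assms by simp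

lemma M_invol:
  assumes "\<And>y. D y = 0" and j: "j \<in> S"
  shows "(\<Sum>l\<in>S. M j l * mv y l) = y $ j"
proof -
  define r where "r = (\<chi> j. if j \<in> S then (\<Sum>l\<in>S. M j l * mv y l) - y $ j else 0)"
  have "(\<Sum>j\<in>S. (\<Sum>l\<in>S. M j l * mv y l) * r$j) = (\<Sum>l\<in>S. mv y l * mv r l)"
  proof -
    have "(\<Sum>j\<in>S. (\<Sum>l\<in>S. M j l * mv y l) * r$j) = (\<Sum>j\<in>S. \<Sum>l\<in>S. M j l * mv y l * r$j)"
      by (simp add: sum_distrib_right)
    also have "\<dots> = (\<Sum>l\<in>S. \<Sum>j\<in>S. M j l * mv y l * r$j)" by (rule sum.swap)
    also have "\<dots> = (\<Sum>l\<in>S. mv y l * mv r l)"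
      unfolding mv_def[of r] by (simp add: sum_distrib_left mult_ac symM)
    finally show ?thesis .
  qed
  moreover have "(\<Sum>j\<in>S. r$j * r$j) = (\<Sum>j\<in>S. (\<Sum>l\<in>S. M j l * mv y l) * r$j - y$j * r$j)"
    by (intro sum.cong refl) (simp add: r_def algebra_simps)
  ultimately have "(\<Sum>j\<in>S. r$j * r$j) = E y r"
    unfolding E_def by (simp add: sum_subtractf)
  also have "\<dots> = 0" using E_zero assms(1) by blast
  finally have "(\<Sum>j\<in>S. r$j * r$j) = 0" .
  then have "\<forall>j\<in>S. r$j * r$j = 0"
    by (subst (asm) sum_nonneg_eq_0_iff) auto
  then show ?thesis using j unfolding r_def by simp
qed

end


definition setm :: "real^'n::finite \<Rightarrow> 'n \<Rightarrow> real \<Rightarrow> real^'n" where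
  "setm y m s = (\<chi> i. if i = m then s else y $ i)"

lemma setm_m[simp]: "setm y m s $ m = s" by (simp add: setm_def)
lemma setm_other[simp]: "i \<noteq> m \<Longrightarrow> setm y m s $ i = y $ i" by (simp add: setm_def)

lemma sum_atMost3: "(\<Sum>j\<le>(3::nat). g j) = g 0 + g 1 + g 2 + (g 3::real)"
  by (simp add: numeral_eq_Suc atMost_Suc)
lemma sum_atMost4: "(\<Sum>j\<le>(4::nat). g j) = g 0 + g 1 + g 2 + g 3 + (g 4::real)"
  by (simp add: numeral_eq_Suc atMost_Suc)

locale eik1 = eik +
  fixes m
  assumes Rm: "R = {m}"
begin

lemma mP: "m \<notin> P" using Rm disj by auto
lemma mk: "m \<noteq> k" using Rm kR by auto
lemma PRm: "P \<union> R - {m} = P" using Rm mP by auto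
lemma mPR: "m \<in> P \<union> R" using Rm by auto

lemma loc_m: "\<forall>i\<in>P. (y + s *\<^sub>R axis m 1) $ i = y $ i"
  using mP by (auto simp: axis_def)

lemma loc_set: "\<forall>i\<in>P. setm y m s $ i = y $ i"
  using mP by (auto simp: setm_def)

lemma sumR: "(\<Sum>i\<in>R. g i) = g m" using Rm by simp

lemma psi_eq_mpd: "\<psi> y = y$m * pd \<psi> y m"
proof -
  define z where "z = zk y"
  have "64 * \<psi> z + 64 * (\<Sum>j\<in>P. z$j * pd \<psi> z j) - 192 * (z$m * pd \<psi> z m) = 0"
    using coeffs(1)[OF zk_k, of y] unfolding z_def sumR .
  moreover have "(\<Sum>j\<in>P. z$j * pd \<psi> z j) + z$m * pd \<psi> z m = 3 * \<psi> z"
    using euler_psi[of z] unfolding sumR .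
  ultimately have "\<psi> z = z$m * pd \<psi> z m" by simp
  moreover have "\<psi> z = \<psi> y" unfolding z_def by (rule psi_zk)
  moreover have "pd \<psi> z m = pd \<psi> y m" unfolding z_def using hom_poly_pd_local[OF hpsi zk_loc] .
  moreover have "z $ m = y $ m" unfolding z_def zk_def using mk by simp
  ultimately show ?thesis by simp
qed

lemma psi_decomp: obtains \<Psi> where "\<And>j. j \<le> 3 \<Longrightarrow> hom_poly (3 - j) P (\<Psi> j)"
  "\<And>y. \<psi> y = \<Psi> 0 y + y$m * \<Psi> 1 y + (y$m)^2 * \<Psi> 2 y + (y$m)^3 * \<Psi> 3 y"
proof -
  obtain C where C: "\<forall>j\<le>3. hom_poly (3 - j) (P \<union> R - {m}) (C j)" "\<forall>y. \<psi> y = (\<Sum>j\<le>3. (y $ m) ^ j * C j y)"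
    using hom_poly_decomp[OF hpsi mPR] by blast
  show ?thesis
    by (rule that[of C]) (use C PRm in \<open>auto simp: sum_atMost3\<close>)
qed

lemma th_decomp: obtains \<Theta> where "\<And>j. j \<le> 4 \<Longrightarrow> hom_poly (4 - j) P (\<Theta> j)"
  "\<And>y. \<theta> y = \<Theta> 0 y + y$m * \<Theta> 1 y + (y$m)^2 * \<Theta> 2 y + (y$m)^3 * \<Theta> 3 y + (y$m)^4 * \<Theta> 4 y"
proof -
  obtain C where C: "\<forall>j\<le>4. hom_poly (4 - j) (P \<union> R - {m}) (C j)" "\<forall>y. \<theta> y = (\<Sum>j\<le>4. (y $ m) ^ j * C j y)"
    using hom_poly_decomp[OF hth mPR] by blast
  show ?thesis
    by (rule that[of C]) (use C PRm in \<open>auto simp: sum_atMost4\<close>)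
qed

lemma psi_form: obtains Qf where "hom_poly 2 P Qf" "\<And>y. \<psi> y = y$m * Qf y"
proof -
  obtain \<Psi> where H: "\<And>j. j \<le> 3 \<Longrightarrow> hom_poly (3 - j) P (\<Psi> j)"
    and E: "\<And>y. \<psi> y = \<Psi> 0 y + y$m * \<Psi> 1 y + (y$m)^2 * \<Psi> 2 y + (y$m)^3 * \<Psi> 3 y"
    using psi_decomp by blast
  have const: "\<Psi> j (y + s *\<^sub>R axis m 1) = \<Psi> j y" if "j \<le> 3" for j y s
    using hom_poly_local[OF H[OF that] loc_m] .
  have pdm: "pd \<psi> y m = \<Psi> 1 y + 2 * y$m * \<Psi> 2 y + 3 * (y$m)^2 * \<Psi> 3 y" for y
  proof -
    have e: "(\<lambda>s. \<psi> (y + s *\<^sub>R axis m 1)) =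
      (\<lambda>s. \<Psi> 0 y + (y$m + s) * \<Psi> 1 y + (y$m + s)^2 * \<Psi> 2 y + (y$m + s)^3 * \<Psi> 3 y)"
      by (rule ext) (simp add: E const)
    have "((\<lambda>s. \<Psi> 0 y + (y$m + s) * \<Psi> 1 y + (y$m + s)^2 * \<Psi> 2 y + (y$m + s)^3 * \<Psi> 3 y) has_real_derivative
       (\<Psi> 1 y + 2 * y$m * \<Psi> 2 y + 3 * (y$m)^2 * \<Psi> 3 y)) (at 0)"
      by (auto intro!: derivative_eq_intros simp: power2_eq_square)
    then show ?thesis unfolding pd_def e by (rule DERIV_imp_deriv)
  qed
  have z: "\<Psi> 0 y = 0 \<and> \<Psi> 2 y = 0 \<and> \<Psi> 3 y = 0" for y
  proof -
    have cs: "\<Psi> j (setm y m s) = \<Psi> j y" if "j \<le> 3" for j s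
      using hom_poly_local[OF H[OF that] loc_set] .
    have "\<forall>s. \<Psi> 0 y + 0 * s + (- \<Psi> 2 y) * s^2 + (- 2 * \<Psi> 3 y) * s^3 + 0 * s^4 + 0 * s^5 + 0 * s^6 = 0"
    proof
      fix s
      have "\<psi> (setm y m s) = setm y m s $ m * pd \<psi> (setm y m s) m" by (rule psi_eq_mpd)
      then show "\<Psi> 0 y + 0 * s + (- \<Psi> 2 y) * s^2 + (- 2 * \<Psi> 3 y) * s^3 + 0 * s^4 + 0 * s^5 + 0 * s^6 = 0"
        unfolding E pdm by (simp add: cs power2_eq_square power3_eq_cube algebra_simps)
    qed
    from poly6_zero[OF this] show ?thesis by simp
  qed
  show ?thesis
    by (rule that[of "\<Psi> 1"]) (use H[of 1] E z in auto)
qed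

end


locale eik2 = eik1 +
  fixes Qf and \<Theta> :: "nat \<Rightarrow> _"
  assumes hQ: "hom_poly 2 P Qf" and psiQ: "\<And>y. \<psi> y = y$m * Qf y"
    and hTh: "\<And>j. j \<le> 4 \<Longrightarrow> hom_poly (4 - j) P (\<Theta> j)"
    and thE: "\<And>y. \<theta> y = \<Theta> 0 y + y$m * \<Theta> 1 y + (y$m)^2 * \<Theta> 2 y + (y$m)^3 * \<Theta> 3 y + (y$m)^4 * \<Theta> 4 y"
begin

definition SP where "SP y = (\<Sum>i\<in>P. (y$i)^2)"
definition G where "G y = (\<Sum>j\<in>P. (pd Qf y j)^2)"

lemma Th_m: "j \<le> 4 \<Longrightarrow> \<Theta> j (y + s *\<^sub>R axis m 1) = \<Theta> j y"
  using hom_poly_local[OF hTh loc_m] .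

lemma Q_m: "Qf (y + s *\<^sub>R axis m 1) = Qf y"
  using hom_poly_local[OF hQ loc_m] .

lemma pd_psi_P: assumes j: "j \<in> P" shows "pd \<psi> y j = y$m * pd Qf y j"
proof -
  have jm: "j \<noteq> m" "m \<noteq> j" using j mP by auto
  have e: "(\<lambda>s. \<psi> (y + s *\<^sub>R axis j 1)) = (\<lambda>s. y$m * Qf (y + s *\<^sub>R axis j 1))"
    by (rule ext) (simp add: psiQ axis_def jm)
  have "((\<lambda>s. y$m * Qf (y + s *\<^sub>R axis j 1)) has_real_derivative y$m * pd Qf y j) (at 0)"
    by (intro DERIV_cmult pd_deriv hom_poly_differentiable[OF hQ])
  then show ?thesis unfolding pd_def[of \<psi>] e by (rule DERIV_imp_deriv)
qed

lemma pd_psi_m: "pd \<psi> y m = Qf y"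
proof -
  have e: "(\<lambda>s. \<psi> (y + s *\<^sub>R axis m 1)) = (\<lambda>s. (y$m + s) * Qf y)"
    by (rule ext) (simp add: psiQ Q_m)
  have "((\<lambda>s. (y$m + s) * Qf y) has_real_derivative Qf y) (at 0)"
    by (auto intro!: derivative_eq_intros)
  then show ?thesis unfolding pd_def[of \<psi>] e by (rule DERIV_imp_deriv)
qed

lemma pd_th_P: assumes j: "j \<in> P"
  shows "pd \<theta> y j = pd (\<Theta> 0) y j + y$m * pd (\<Theta> 1) y j + (y$m)^2 * pd (\<Theta> 2) y j
     + (y$m)^3 * pd (\<Theta> 3) y j + (y$m)^4 * pd (\<Theta> 4) y j"
proof -
  have jm: "j \<noteq> m" "m \<noteq> j" using j mP by auto
  have e: "(\<lambda>s. \<theta> (y + s *\<^sub>R axis j 1)) = (\<lambda>s. \<Theta> 0 (y + s *\<^sub>R axis j 1) + y$m * \<Theta> 1 (y + s *\<^sub>R axis j 1)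
     + (y$m)^2 * \<Theta> 2 (y + s *\<^sub>R axis j 1) + (y$m)^3 * \<Theta> 3 (y + s *\<^sub>R axis j 1) + (y$m)^4 * \<Theta> 4 (y + s *\<^sub>R axis j 1))"
    by (rule ext) (simp add: thE axis_def jm)
  have d: "\<And>l. l \<le> 4 \<Longrightarrow> ((\<lambda>s. \<Theta> l (y + s *\<^sub>R axis j 1)) has_real_derivative pd (\<Theta> l) y j) (at 0)"
    by (intro pd_deriv hom_poly_differentiable[OF hTh]) 
  have "((\<lambda>s. \<Theta> 0 (y + s *\<^sub>R axis j 1) + y$m * \<Theta> 1 (y + s *\<^sub>R axis j 1)
     + (y$m)^2 * \<Theta> 2 (y + s *\<^sub>R axis j 1) + (y$m)^3 * \<Theta> 3 (y + s *\<^sub>R axis j 1) + (y$m)^4 * \<Theta> 4 (y + s *\<^sub>R axis j 1))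
     has_real_derivative (pd (\<Theta> 0) y j + y$m * pd (\<Theta> 1) y j + (y$m)^2 * pd (\<Theta> 2) y j
     + (y$m)^3 * pd (\<Theta> 3) y j + (y$m)^4 * pd (\<Theta> 4) y j)) (at 0)"
    by (intro DERIV_add DERIV_cmult d) auto
  then show ?thesis unfolding pd_def[of \<theta>] e by (rule DERIV_imp_deriv)
qed

lemma pd_th_m: "pd \<theta> y m = \<Theta> 1 y + 2 * y$m * \<Theta> 2 y + 3 * (y$m)^2 * \<Theta> 3 y + 4 * (y$m)^3 * \<Theta> 4 y"
proof -
  have e: "(\<lambda>s. \<theta> (y + s *\<^sub>R axis m 1)) = (\<lambda>s. \<Theta> 0 y + (y$m + s) * \<Theta> 1 y + (y$m + s)^2 * \<Theta> 2 y
      + (y$m + s)^3 * \<Theta> 3 y + (y$m + s)^4 * \<Theta> 4 y)"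
    by (rule ext) (simp add: thE Th_m)
  have "((\<lambda>s. \<Theta> 0 y + (y$m + s) * \<Theta> 1 y + (y$m + s)^2 * \<Theta> 2 y
      + (y$m + s)^3 * \<Theta> 3 y + (y$m + s)^4 * \<Theta> 4 y) has_real_derivative
      (\<Theta> 1 y + 2 * y$m * \<Theta> 2 y + 3 * (y$m)^2 * \<Theta> 3 y + 4 * (y$m)^3 * \<Theta> 4 y)) (at 0)"
    by (auto intro!: derivative_eq_intros simp: power2_eq_square power3_eq_cube)
  then show ?thesis unfolding pd_def[of \<theta>] e by (rule DERIV_imp_deriv)
qed

lemma euler_Th: "l \<le> 4 \<Longrightarrow> (\<Sum>j\<in>P. y$j * pd (\<Theta> l) y j) = (4 - real l) * \<Theta> l y"
  using hom_poly_euler[OF hTh, of l y] by (simp add: of_nat_diff)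

lemma euler_Q: "(\<Sum>j\<in>P. y$j * pd Qf y j) = 2 * Qf y"
  using hom_poly_euler[OF hQ, of y] by simp

end


context eik2 begin

definition pp where "pp y = (\<chi> i. if i \<in> P then y $ i else 0)"

definition zz where "zz y s = setm (pp y) m s"

lemma zz_P: "i \<in> P \<Longrightarrow> zz y s $ i = y $ i"
  using mP by (auto simp: zz_def pp_def setm_def)
lemma zz_m: "zz y s $ m = s" by (simp add: zz_def)
lemma zz_k: "zz y s $ k = 0" using mk kP by (auto simp: zz_def pp_def setm_def)
lemma zz_loc: "\<forall>i\<in>P. zz y s $ i = y $ i" using zz_P by auto

lemma SP_zz: "(\<Sum>i\<in>P. (zz y s $ i)^2) = SP y" unfolding SP_def using zz_P by (intro sum.cong) auto
lemma Q_zz: "Qf (zz y s) = Qf y" using hom_poly_local[OF hQ zz_loc] .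
lemma pdQ_zz: "pd Qf (zz y s) j = pd Qf y j" using hom_poly_pd_local[OF hQ zz_loc] .
lemma Th_zz: "l \<le> 4 \<Longrightarrow> \<Theta> l (zz y s) = \<Theta> l y" using hom_poly_local[OF hTh zz_loc] .
lemma G_zz: "G (zz y s) = G y" unfolding G_def pdQ_zz ..

lemma eta_eq:
  "16 * (SP y - 3 * s^2)^2 + 64 * s^2 * G y + 64 * (Qf y)^2
   + 8 * (4 * \<Theta> 0 y + 3 * s * \<Theta> 1 y + 2 * s^2 * \<Theta> 2 y + s^3 * \<Theta> 3 y)
   - 24 * s * (\<Theta> 1 y + 2 * s * \<Theta> 2 y + 3 * s^2 * \<Theta> 3 y + 4 * s^3 * \<Theta> 4 y) = 48 * (SP y + s^2)^2"
proof -
  define z where "z = zz y s"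
  have C: "16 * ((\<Sum>i\<in>P. (z$i)^2) - 3 * (\<Sum>i\<in>R. (z$i)^2))^2 + 64 * (\<Sum>j\<in>P. (pd \<psi> z j)^2) + 64 * (\<Sum>j\<in>R. (pd \<psi> z j)^2)
         + 8 * (\<Sum>j\<in>P. z$j * pd \<theta> z j) - 24 * (\<Sum>j\<in>R. z$j * pd \<theta> z j) = 48 * ((\<Sum>i\<in>P. (z$i)^2) + (\<Sum>i\<in>R. (z$i)^2))^2"
    using coeffs(2)[of z] zz_k unfolding z_def by simp
  have zm: "z $ m = s" unfolding z_def by (rule zz_m)
  have a1: "(\<Sum>i\<in>P. (z$i)^2) = SP y" unfolding z_def by (rule SP_zz)
  have a2: "(\<Sum>i\<in>R. (z$i)^2) = s^2" using zm by (simp add: sumR)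
  have a3: "(\<Sum>j\<in>P. (pd \<psi> z j)^2) = s^2 * G y"
  proof -
    have "(\<Sum>j\<in>P. (pd \<psi> z j)^2) = (\<Sum>j\<in>P. s^2 * (pd Qf y j)^2)"
      by (intro sum.cong refl) (simp add: pd_psi_P z_def zz_m pdQ_zz power_mult_distrib)
    then show ?thesis by (simp add: G_def sum_distrib_left)
  qed
  have a4: "(\<Sum>j\<in>R. (pd \<psi> z j)^2) = (Qf y)^2"
    by (simp add: sumR pd_psi_m z_def Q_zz)
  have a5: "(\<Sum>j\<in>P. z$j * pd \<theta> z j) = 4 * \<Theta> 0 y + 3 * s * \<Theta> 1 y + 2 * s^2 * \<Theta> 2 y + s^3 * \<Theta> 3 y"
  proof -
    have "(\<Sum>j\<in>P. z$j * pd \<theta> z j) = (\<Sum>j\<in>P. z$j * pd (\<Theta> 0) z j) + s * (\<Sum>j\<in>P. z$j * pd (\<Theta> 1) z j)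
       + s^2 * (\<Sum>j\<in>P. z$j * pd (\<Theta> 2) z j) + s^3 * (\<Sum>j\<in>P. z$j * pd (\<Theta> 3) z j) + s^4 * (\<Sum>j\<in>P. z$j * pd (\<Theta> 4) z j)"
      by (simp add: pd_th_P zm sum.distrib sum_distrib_left algebra_simps)
    also have "\<dots> = 4 * \<Theta> 0 z + s * (3 * \<Theta> 1 z) + s^2 * (2 * \<Theta> 2 z) + s^3 * \<Theta> 3 z"
      using euler_Th[of 0 z] euler_Th[of 1 z] euler_Th[of 2 z] euler_Th[of 3 z] euler_Th[of 4 z] by simp
    finally show ?thesis unfolding z_def by (simp add: Th_zz)
  qed
  have a6: "(\<Sum>j\<in>R. z$j * pd \<theta> z j) = s * (\<Theta> 1 y + 2 * s * \<Theta> 2 y + 3 * s^2 * \<Theta> 3 y + 4 * s^3 * \<Theta> 4 y)"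
    by (simp add: sumR pd_th_m zm) (simp add: z_def Th_zz)
  show ?thesis using C unfolding a1 a2 a3 a4 a5 a6 by simp
qed

lemma eta_coeffs:
  "\<Theta> 0 y = (SP y)^2 - 2 * (Qf y)^2" "\<Theta> 2 y = 2 * G y - 6 * SP y" "\<Theta> 3 y = 0" "\<Theta> 4 y = 1"
proof -
  have "\<forall>s. (32 * \<Theta> 0 y + 64 * (Qf y)^2 - 32 * (SP y)^2) + 0 * s + (64 * G y - 32 * \<Theta> 2 y - 192 * SP y) * s^2
     + (- 64 * \<Theta> 3 y) * s^3 + (96 - 96 * \<Theta> 4 y) * s^4 + 0 * s^5 + 0 * s^6 = 0"
  proof
    fix s
    show "(32 * \<Theta> 0 y + 64 * (Qf y)^2 - 32 * (SP y)^2) + 0 * s + (64 * G y - 32 * \<Theta> 2 y - 192 * SP y) * s^2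
     + (- 64 * \<Theta> 3 y) * s^3 + (96 - 96 * \<Theta> 4 y) * s^4 + 0 * s^5 + 0 * s^6 = 0"
      using eta_eq[of y s] by algebra
  qed
  from poly6_zero[OF this]
  show "\<Theta> 0 y = (SP y)^2 - 2 * (Qf y)^2" "\<Theta> 2 y = 2 * G y - 6 * SP y" "\<Theta> 3 y = 0" "\<Theta> 4 y = 1"
    by auto
qed

end


context eik2 begin

lemma pdTh0: assumes j: "j \<in> P" shows "pd (\<Theta> 0) y j = 4 * SP y * y$j - 4 * Qf y * pd Qf y j"
proof -
  have e: "(\<lambda>s. \<Theta> 0 (y + s *\<^sub>R axis j 1)) = (\<lambda>s. (\<Sum>i\<in>P. ((y + s *\<^sub>R axis j 1) $ i)^2)^2 - 2 * (Qf (y + s *\<^sub>R axis j 1))^2)"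
    by (rule ext) (simp add: eta_coeffs(1) SP_def)
  have dS: "((\<lambda>s. \<Sum>i\<in>P. ((y + s *\<^sub>R axis j 1) $ i)^2) has_real_derivative 2 * y $ j) (at 0)"
    using sumsq_deriv[OF finP, of y j] j by simp
  have dQ: "((\<lambda>s. Qf (y + s *\<^sub>R axis j 1)) has_real_derivative pd Qf y j) (at 0)"
    by (intro pd_deriv hom_poly_differentiable[OF hQ])
  have "((\<lambda>s. (\<Sum>i\<in>P. ((y + s *\<^sub>R axis j 1) $ i)^2)^2 - 2 * (Qf (y + s *\<^sub>R axis j 1))^2) has_real_derivative
      (4 * SP y * y$j - 4 * Qf y * pd Qf y j)) (at 0)"
    apply (rule dS dQ derivative_eq_intros | simp)+
    by (simp add: SP_def)
  then show ?thesis unfolding pd_def[of "\<Theta> 0"] e by (rule DERIV_imp_deriv)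
qed

lemma th1_Q:
  "\<Theta> 1 y = 0" "(Qf y)^2 * (G y - 4 * SP y) = 0"
proof -
  define w where "w = zz y 0"
  have wk: "w $ k = 0" unfolding w_def by (rule zz_k)
  have wm: "w $ m = 0" unfolding w_def by (rule zz_m)
  have psiw: "\<psi> w = 0" using wm by (simp add: psiQ)
  have Qw: "Qf w = Qf y" unfolding w_def by (rule Q_zz)
  have Thw: "\<And>l. l \<le> 4 \<Longrightarrow> \<Theta> l w = \<Theta> l y" unfolding w_def by (rule Th_zz)
  have SPw: "(\<Sum>i\<in>P. (w$i)^2) = SP y" unfolding w_def by (rule SP_zz)
  have dpsiP: "\<And>j. j \<in> P \<Longrightarrow> pd \<psi> w j = 0" using wm by (simp add: pd_psi_P)
  have dthm: "pd \<theta> w m = \<Theta> 1 y" using wm Thw by (simp add: pd_th_m)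
  have dthP: "\<And>j. j \<in> P \<Longrightarrow> pd \<theta> w j = pd (\<Theta> 0) y j"
    using wm hom_poly_pd_local[OF hTh[of 0] zz_loc, of y 0] by (simp add: pd_th_P w_def)
  have c1: "Qf y * \<Theta> 1 y = 0"
    using coeffs(3)[OF wk] psiw dpsiP dthm by (simp add: sumR pd_psi_m Qw)
  have c0: "(\<Sum>j\<in>P. (pd (\<Theta> 0) y j)^2) + (\<Theta> 1 y)^2 = 16 * (SP y)^3"
    using coeffs(4)[OF wk] psiw dthP dthm wm by (simp add: sumR SPw)
  have "(\<Sum>j\<in>P. (pd (\<Theta> 0) y j)^2) = (\<Sum>j\<in>P. (4 * SP y)^2 * (y$j)^2 - 2 * (4 * SP y) * (4 * Qf y) * (y$j * pd Qf y j)
       + (4 * Qf y)^2 * (pd Qf y j)^2)"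
    by (intro sum.cong refl) (simp add: pdTh0 power2_eq_square algebra_simps)
  also have "\<dots> = (4 * SP y)^2 * SP y - 2 * (4 * SP y) * (4 * Qf y) * (2 * Qf y) + (4 * Qf y)^2 * G y"
    unfolding euler_Q[symmetric] by (simp add: sum.distrib sum_subtractf sum_distrib_left[symmetric] SP_def G_def)
  finally have "(\<Theta> 1 y)^2 = 16 * (Qf y)^2 * (4 * SP y - G y)"
    using c0 by (simp add: power2_eq_square power3_eq_cube algebra_simps)
  then show "\<Theta> 1 y = 0" "(Qf y)^2 * (G y - 4 * SP y) = 0"
    using c1 by (auto simp: power2_eq_square algebra_simps)
qed

end


context eik2 begin

lemma F_form: "F y = (y$k)^4 + 2 * (SP y - 3 * (y$m)^2) * (y$k)^2 + 8 * (y$m) * Qf y * y$k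
   + (SP y)^2 - 2 * (Qf y)^2 + (y$m)^2 * (2 * G y - 6 * SP y) + (y$m)^4"
  unfolding F_def thE eta_coeffs th1_Q(1) using psiQ[of y] by (simp add: sumR SP_def)

lemma norm_split: "(norm v)^2 = (v$k)^2 + SP v + (v$m)^2"
  using normsq[of v] by (simp add: sumR SP_def)

lemma branchA:
  assumes Q0: "\<And>w. Qf w = 0"
  shows "primitive f"
proof -
  have G0: "G y = 0" for y unfolding G_def using pd_zero_fun[of Qf] Q0 by simp
  define H where "H = {v::real^'a. v $ m = 0}"
  have sH: "subspace H" unfolding subspace_def H_def by auto
  have "f x = h4 H (Q *v x)" for x
  proof -
    define y where "y = Q *v x"
    define p where "p = (\<chi> i. if i = m then 0 else y $ i)"
    have pr: "proj_onto H y = p"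
    proof (rule proj_onto_eq)
      show "\<forall>u\<in>H. \<forall>v\<in>H. u - v \<in> H" unfolding H_def by auto
      show "p \<in> H" unfolding H_def p_def by auto
      show "\<forall>h\<in>H. (y - p) \<bullet> h = 0"
      proof
        fix h assume "h \<in> H"
        then have "h $ m = 0" unfolding H_def by auto
        then show "(y - p) \<bullet> h = 0" unfolding inner_vec_def p_def by (intro sum.neutral) auto
      qed
    qed
    have "SP p = SP y" unfolding SP_def p_def using mP by (intro sum.cong) auto
    then have n1: "(norm p)^2 = (y$k)^2 + SP y" using norm_split[of p] mk by (simp add: p_def)
    have "SP (y - p) = 0" unfolding SP_def p_def using mP by (intro sum.neutral) auto
    then have n2: "(norm (y - p))^2 = (y$m)^2" using norm_split[of "y - p"] mk by (simp add: p_def)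
    have "f x = F y" unfolding y_def by (rule f_F)
    also have "\<dots> = h4 H y"
      unfolding F_form h4_eq[OF pr] n1 n2 using Q0 G0
      by (simp add: power2_eq_square power4_eq_xxxx algebra_simps)
    finally show ?thesis unfolding y_def .
  qed
  then show ?thesis unfolding primitive_def using sH orth
    by (intro exI[of _ H] exI[of _ Q] exI[of _ 1]) simp
qed

end


context eik2 begin

lemma branchB:
  assumes w0: "Qf w0 \<noteq> 0"
  shows "primitive f"
proof -
  obtain M where symM: "\<forall>i j. M i j = M j i" and geq: "\<forall>y. Qf y = (\<Sum>i\<in>P. \<Sum>j\<in>P. M i j * (y$i * y$j))"
    using quad_form[OF hQ] by blast
  interpret q: qf P M Qf
  proof
    show "\<And>i j. M i j = M j i" using symM by blast
    show "\<And>y. Qf y = (\<Sum>i\<in>P. \<Sum>j\<in>P. M i j * (y$i * y$j))" using geq by blast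
  qed
  have pdQ: "\<And>y j. j \<in> P \<Longrightarrow> pd Qf y j = 2 * q.mv y j" by (rule q.pd_g)
  have G4: "G y = 4 * (\<Sum>j\<in>P. (q.mv y j)^2)" for y
    unfolding G_def by (simp add: pdQ power_mult_distrib sum_distrib_left)
  have "(Qf y)^2 * q.D y = 0" for y
    using th1_Q(2)[of y] unfolding G4 q.D_def SP_def by (simp add: algebra_simps)
  then have D0: "\<And>b. q.D b = 0" using q.D_zero[OF w0] by blast
  have mvsq: "(\<Sum>j\<in>P. (q.mv y j)^2) = SP y" for y using D0[of y] unfolding q.D_def SP_def by simp
  have G4': "G y = 4 * SP y" for y using G4 mvsq by simp
  have inv: "\<And>y j. j \<in> P \<Longrightarrow> (\<Sum>l\<in>P. M j l * q.mv y l) = y $ j" using q.M_invol[OF D0] .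
  have Qy: "Qf y = (\<Sum>i\<in>P. y$i * q.mv y i)" for y using q.g_B unfolding q.B_def .
  have mv_add: "q.mv (u + v) j = q.mv u j + q.mv v j" for u v j
    using q.mv_lin[of u 1 v j] by simp
  have mv_diff: "q.mv (u - v) j = q.mv u j - q.mv v j" for u v j
    using q.mv_lin[of u "-1" v j] by simp
  have mv_scale: "q.mv (c *\<^sub>R u) j = c * q.mv u j" for c u j
    unfolding q.mv_def by (simp add: sum_distrib_left mult_ac)
  have mv0: "q.mv 0 j = 0" for j unfolding q.mv_def by simp
  define H where "H = {v::real^'a. v $ k = v $ m \<and> (\<forall>j\<in>P. q.mv v j = - v $ j)}"
  have sH: "subspace H" unfolding subspace_def H_def by (auto simp: mv_add mv_scale mv0)
  have "f x = -1 * h4 H (Q *v x)" for x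
  proof -
    define y where "y = Q *v x"
    define p where "p = (\<chi> i. if i = k \<or> i = m then (y$k + y$m) / 2 else if i \<in> P then (y$i - q.mv y i) / 2 else 0)"
    have pk: "p $ k = (y$k + y$m) / 2" and pm: "p $ m = (y$k + y$m) / 2" by (simp_all add: p_def)
    have pP: "\<And>i. i \<in> P \<Longrightarrow> p $ i = (y$i - q.mv y i) / 2"
    proof -
      fix i assume "i \<in> P"
      then have "i \<noteq> k" "i \<noteq> m" using kP mP by auto
      then show "p $ i = (y$i - q.mv y i) / 2" using \<open>i \<in> P\<close> by (simp add: p_def)
    qed
    have mvp: "\<And>j. j \<in> P \<Longrightarrow> q.mv p j = - p $ j"
    proof -
      fix j assume j: "j \<in> P"
      have "q.mv p j = (\<Sum>l\<in>P. M j l * ((y$l - q.mv y l) / 2))"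
        unfolding q.mv_def[of p j] by (intro sum.cong refl) (simp add: pP)
      also have "\<dots> = (q.mv y j - (\<Sum>l\<in>P. M j l * q.mv y l)) / 2"
        unfolding q.mv_def[of y j] by (simp add: sum_subtractf sum_divide_distrib[symmetric] algebra_simps)
      also have "\<dots> = - p $ j" using inv[OF j] pP[OF j] by simp
      finally show "q.mv p j = - p $ j" .
    qed
    have pr: "proj_onto H y = p"
    proof (rule proj_onto_eq)
      show "\<forall>u\<in>H. \<forall>v\<in>H. u - v \<in> H" unfolding H_def by (auto simp: mv_diff)
      show "p \<in> H" unfolding H_def using pk pm mvp by auto
      show "\<forall>h\<in>H. (y - p) \<bullet> h = 0"
      proof
        fix h assume "h \<in> H"
        then have hkm: "h $ k = h $ m" and hP: "\<And>j. j \<in> P \<Longrightarrow> q.mv h j = - h $ j" unfolding H_def by auto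
        have "(y - p) \<bullet> h = (y - p)$k * h$k + (\<Sum>j\<in>P. (y - p)$j * h$j) + (y - p)$m * h$m"
          unfolding inner_vec_def using sum_sq_split[of "\<lambda>j. (y - p)$j * h$j"] by (simp add: sumR)
        also have "(\<Sum>j\<in>P. (y - p)$j * h$j) = (\<Sum>j\<in>P. (y$j * h$j + h$j * q.mv y j) / 2)"
          by (intro sum.cong refl) (simp add: pP field_simps)
        also have "\<dots> = ((\<Sum>j\<in>P. y$j * h$j) + (\<Sum>j\<in>P. h$j * q.mv y j)) / 2"
          by (simp add: sum.distrib sum_divide_distrib[symmetric])
        also have "(\<Sum>j\<in>P. h$j * q.mv y j) = (\<Sum>j\<in>P. y$j * q.mv h j)"
          using q.B_sym[of h y] unfolding q.B_def .
        also have "\<dots> = - (\<Sum>j\<in>P. y$j * h$j)" by (simp add: hP sum_negf)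
        finally show "(y - p) \<bullet> h = 0" using hkm pk pm by (simp add: algebra_simps)
      qed
    qed
    have sp1: "SP p = (SP y - Qf y) / 2"
    proof -
      have "SP p = (\<Sum>i\<in>P. ((y$i)^2 - 2 * (y$i * q.mv y i) + (q.mv y i)^2) / 4)"
        unfolding SP_def by (intro sum.cong refl) (simp add: pP power2_eq_square field_simps)
      also have "\<dots> = (SP y - 2 * Qf y + SP y) / 4"
        unfolding Qy SP_def using mvsq[of y, unfolded SP_def]
        by (simp add: sum.distrib sum_subtractf sum_divide_distrib[symmetric] sum_distrib_left[symmetric])
      finally show ?thesis by simp
    qed
    have sp2: "SP (y - p) = (SP y + Qf y) / 2"
    proof -
      have "SP (y - p) = (\<Sum>i\<in>P. ((y$i)^2 + 2 * (y$i * q.mv y i) + (q.mv y i)^2) / 4)"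
        unfolding SP_def by (intro sum.cong refl) (simp add: pP power2_eq_square field_simps)
      also have "\<dots> = (SP y + 2 * Qf y + SP y) / 4"
        unfolding Qy SP_def using mvsq[of y, unfolded SP_def]
        by (simp add: sum.distrib sum_divide_distrib[symmetric] sum_distrib_left[symmetric])
      finally show ?thesis by simp
    qed
    define A where "A = (y$k + y$m)^2 + (SP y - Qf y)"
    define B where "B = (y$k - y$m)^2 + (SP y + Qf y)"
    have n1: "(norm p)^2 = A / 2"
      using norm_split[of p] pk pm sp1 unfolding A_def by (simp add: power2_eq_square field_simps)
    have n2: "(norm (y - p))^2 = B / 2"
      using norm_split[of "y - p"] pk pm sp2 unfolding B_def by (simp add: power2_eq_square field_simps)
    have key: "4 * F y = -1 * (A^2 - 6 * A * B + B^2)"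
      unfolding F_form G4' A_def B_def by (simp add: power2_eq_square power4_eq_xxxx algebra_simps)
    have hh: "h4 H y = (A^2 - 6 * A * B + B^2) / 4"
      unfolding h4_eq[OF pr] n1 n2 by (simp add: power2_eq_square field_simps)
    have "f x = F y" unfolding y_def by (rule f_F)
    also have "\<dots> = -1 * h4 H y"
      using key hh by simp
    finally show ?thesis unfolding y_def .
  qed
  then show ?thesis unfolding primitive_def using sH orth
    by (intro exI[of _ H] exI[of _ Q] exI[of _ "-1"]) simp
qed

end


context eik1 begin

lemma caseR1: "primitive f"
proof -
  obtain Qf where hQ: "hom_poly 2 P Qf" and psiQ: "\<And>y. \<psi> y = y$m * Qf y" using psi_form by blast
  obtain \<Theta> where hT: "\<And>j. j \<le> 4 \<Longrightarrow> hom_poly (4 - j) P (\<Theta> j)"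
    and thE: "\<And>y. \<theta> y = \<Theta> 0 y + y$m * \<Theta> 1 y + (y$m)^2 * \<Theta> 2 y + (y$m)^3 * \<Theta> 3 y + (y$m)^4 * \<Theta> 4 y"
    using th_decomp by blast
  interpret e2: eik2 f Q P R k \<psi> \<theta> m Qf \<Theta>
    by unfold_locales (fact hQ psiQ hT thE)+
  show ?thesis
  proof (cases "\<forall>w. Qf w = 0")
    case True then show ?thesis using e2.branchA by blast
  next
    case False then show ?thesis using e2.branchB by blast
  qed
qed

end

theorem proposition2p2:
  fixes f :: "real^'n \<Rightarrow> real"
  assumes "hom_poly 4 UNIV f"
    and "\<forall>x. (norm (grad f x))^2 = 16 * (norm x)^6"
    and "E_class 0 (CARD('n) - 1) f \<or> E_class (CARD('n) - 1) 0 f \<or> E_class (CARD('n) - 2) 1 f"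
  shows "primitive f"
proof -
  have gen: "primitive f" if E: "E_class p q f" and pq: "p = 0 \<or> q = 0 \<or> q = 1" for p q
  proof -
    from E obtain Q P R k \<psi> \<theta> where
      orth: "orthogonal_matrix Q" and disj: "P \<inter> R = {}" and kP: "k \<notin> P" and kR: "k \<notin> R"
      and cover: "P \<union> R \<union> {k} = UNIV" and cP: "card P = p" and cR: "card R = q"
      and hpsi: "hom_poly 3 (P \<union> R) \<psi>" and hth: "hom_poly 4 (P \<union> R) \<theta>"
      and feq: "\<forall>x. let y = Q *v x in
            f x = (y$k)^4 + 2 * ((\<Sum>i\<in>P. (y$i)^2) - 3 * (\<Sum>i\<in>R. (y$i)^2)) * (y$k)^2
                  + 8 * \<psi> y * y$k + \<theta> y"
      unfolding E_class_def by blast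
    interpret e: eik f Q P R k \<psi> \<theta>
      using orth disj kP kR cover hpsi hth feq assms(2) by unfold_locales
    show ?thesis
    proof -
      consider "p = 0" | "q = 0" | "q = 1" using pq by blast
      then show ?thesis
      proof cases
        case 1 then have "P = {}" using cP by simp
        then show ?thesis by (rule e.caseP0)
      next
        case 2 then have "R = {}" using cR by simp
        then show ?thesis by (rule e.caseR0)
      next
        case 3 then obtain m where "R = {m}" using cR card_1_singletonE by blast
        then interpret e1: eik1 f Q P R k \<psi> \<theta> m by unfold_locales
        show ?thesis by (rule e1.caseR1)
      qed
    qed
  qed
  from assms(3) show ?thesis
    by (elim disjE) (auto intro: gen)
qed


end
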